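(* Let $M_t$ be a family of smooth closed strictly convex solutions to $\frac{d}{dt}X=\frac1K\nu$ in $\mathbb{R}^3$ on a maximal time interval $[0,T)$. Then $T<\infty$.
   Context: $X$ denotes the embedding, $\nu$ the outer unit normal, $K$ the Gauss curvature. *)

theory Defs
  imports "HOL-Analysis.Analysis"
begin

text \<open>C-infinity smoothness on an open set: all iterated Frechet derivatives exist.
  D vs x is the iterated directional derivative of f at x along the directions in vs.\<close>
definition smooth_on :: "'a::real_normed_vector set \<Rightarrow> ('a \<Rightarrow> 'b::real_normed_vector) \<Rightarrow> bool" where
  "smooth_on S f \<longleftrightarrow> open S \<and>
     (\<exists>D :: 'a list \<Rightarrow> 'a \<Rightarrow> 'b. (\<forall>x\<in>S. D [] x = f x) \<and>
        (\<forall>vs. \<forall>x\<in>S. (D vs has_derivative (\<lambda>h. D (h # vs) x)) (at x)))"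

abbreviation S2 :: "(real^3) set" where "S2 \<equiv> sphere 0 1"

text \<open>Inverse stereographic projections from the north and the south pole; together
  they form an atlas of the unit sphere S2.\<close>
definition chartN :: "real^2 \<Rightarrow> real^3" where
  "chartN w = (let s = (w$1)^2 + (w$2)^2 in
     vector [2 * w$1 / (1 + s), 2 * w$2 / (1 + s), (s - 1) / (1 + s)])"

definition chartS :: "real^2 \<Rightarrow> real^3" where
  "chartS w = (let s = (w$1)^2 + (w$2)^2 in
     vector [2 * w$1 / (1 + s), 2 * w$2 / (1 + s), (1 - s) / (1 + s)])"

definition charts :: "(real^2 \<Rightarrow> real^3) set" where
  "charts = {chartN, chartS}"

definition pd :: "(real^2 \<Rightarrow> real^3) \<Rightarrow> 2 \<Rightarrow> real^2 \<Rightarrow> real^3" where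
  "pd Y i w = frechet_derivative Y (at w) (axis i 1)"

definition pd2 :: "(real^2 \<Rightarrow> real^3) \<Rightarrow> 2 \<Rightarrow> 2 \<Rightarrow> real^2 \<Rightarrow> real^3" where
  "pd2 Y i j w = frechet_derivative (pd Y i) (at w) (axis j 1)"

text \<open>Gauss curvature K = det II / det I of the local parametrisation Y at w
  (independent of the choice of the sign of the unit normal).\<close>
definition gauss_curv_chart :: "(real^2 \<Rightarrow> real^3) \<Rightarrow> real^2 \<Rightarrow> real" where
  "gauss_curv_chart Y w =
    (let n = (1 / norm (cross3 (pd Y 1 w) (pd Y 2 w))) *\<^sub>R cross3 (pd Y 1 w) (pd Y 2 w);
         E = pd Y 1 w \<bullet> pd Y 1 w; F = pd Y 1 w \<bullet> pd Y 2 w; G = pd Y 2 w \<bullet> pd Y 2 w;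
         L = pd2 Y 1 1 w \<bullet> n; M = pd2 Y 1 2 w \<bullet> n; N = pd2 Y 2 2 w \<bullet> n
     in (L * N - M^2) / (E * G - F^2))"

definition closed_strictly_convex :: "(real^3 \<Rightarrow> real^3) \<Rightarrow> bool" where
  "closed_strictly_convex \<Phi> \<longleftrightarrow>
     inj_on \<Phi> S2 \<and> continuous_on S2 \<Phi> \<and>
     (\<forall>\<sigma>\<in>charts. smooth_on UNIV (\<Phi> \<circ> \<sigma>) \<and>
        (\<forall>w. cross3 (pd (\<Phi> \<circ> \<sigma>) 1 w) (pd (\<Phi> \<circ> \<sigma>) 2 w) \<noteq> 0 \<and>
             gauss_curv_chart (\<Phi> \<circ> \<sigma>) w > 0)) \<and>
     convex (\<Phi> ` S2 \<union> inside (\<Phi> ` S2))"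

definition is_outer_normal :: "(real^3 \<Rightarrow> real^3) \<Rightarrow> (real^2 \<Rightarrow> real^3) \<Rightarrow> real^2 \<Rightarrow> real^3 \<Rightarrow> bool" where
  "is_outer_normal \<Phi> \<sigma> w n \<longleftrightarrow>
     norm n = 1 \<and> n \<bullet> pd (\<Phi> \<circ> \<sigma>) 1 w = 0 \<and> n \<bullet> pd (\<Phi> \<circ> \<sigma>) 2 w = 0 \<and>
     (\<forall>\<^sub>F s in at_right 0. \<Phi> (\<sigma> w) + s *\<^sub>R n \<in> outside (\<Phi> ` S2))"

text \<open>X p t = position at time t of the point with label p \<in> S2. A solution of
  dX/dt = (1/K) \<nu> by smooth closed strictly convex surfaces on [0,T).\<close>
definition ICF_solution :: "(real^3 \<Rightarrow> real \<Rightarrow> real^3) \<Rightarrow> ereal \<Rightarrow> bool" where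
  "ICF_solution X T \<longleftrightarrow>
     0 < T \<and>
     (\<forall>t. 0 \<le> t \<and> ereal t < T \<longrightarrow> closed_strictly_convex (\<lambda>p. X p t)) \<and>
     continuous_on (S2 \<times> {t. 0 \<le> t \<and> ereal t < T}) (\<lambda>(p, t). X p t) \<and>
     (\<forall>\<sigma>\<in>charts. smooth_on {(w, t). 0 < t \<and> ereal t < T} (\<lambda>(w, t). X (\<sigma> w) t)) \<and>
     (\<forall>\<sigma>\<in>charts. \<forall>w t. 0 < t \<and> ereal t < T \<longrightarrow>
        (\<exists>n. is_outer_normal (\<lambda>p. X p t) \<sigma> w n \<and>
             ((\<lambda>s. X (\<sigma> w) s) has_vector_derivative
                 (1 / gauss_curv_chart (\<lambda>w'. X (\<sigma> w') t) w) *\<^sub>R n) (at t)))"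

definition maximal_ICF_solution :: "(real^3 \<Rightarrow> real \<Rightarrow> real^3) \<Rightarrow> ereal \<Rightarrow> bool" where
  "maximal_ICF_solution X T \<longleftrightarrow> ICF_solution X T \<and>
     \<not> (\<exists>T' Y. T < T' \<and> ICF_solution Y T' \<and>
            (\<forall>p\<in>S2. \<forall>t. 0 \<le> t \<and> ereal t < T \<longrightarrow> Y p t = X p t))"

end

theory Submission
  imports Defs
begin

lemma second_order_min:
  fixes \<phi> \<phi>1 :: "real \<Rightarrow> real"
  assumes d1: "\<And>s. (\<phi> has_real_derivative \<phi>1 s) (at s)"
    and d2: "(\<phi>1 has_real_derivative \<phi>2) (at 0)"
    and mn: "\<And>s. \<phi> 0 \<le> \<phi> s"
  shows "\<phi>1 0 = 0" and "\<phi>2 \<ge> 0"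
proof -
  show z: "\<phi>1 0 = 0"
    using DERIV_local_min[OF d1[of 0], of 1] mn by auto
  show "\<phi>2 \<ge> 0"
  proof (rule ccontr)
    assume "\<not> \<phi>2 \<ge> 0"
    hence neg: "\<phi>2 < 0" by simp
    have "((\<lambda>h. (\<phi>1 (0 + h) - \<phi>1 0) / h) \<longlongrightarrow> \<phi>2) (at 0)"
      using d2 by (simp add: DERIV_def)
    hence "\<forall>\<^sub>F h in at 0. (\<phi>1 (0 + h) - \<phi>1 0) / h < 0"
      using neg by (rule order_tendstoD(2))
    then obtain d where d: "d > 0" and dd: "\<And>h. h \<noteq> 0 \<Longrightarrow> dist h 0 < d \<Longrightarrow> \<phi>1 h / h < 0"
      using z by (auto simp: eventually_at)
    have pos: "\<phi>1 h < 0" if "0 < h" "h < d" for h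
      using dd[of h] that by (auto simp: divide_less_0_iff)
    obtain z where "0 < z" "z < d/2" "\<phi> (d/2) - \<phi> 0 = (d/2 - 0) * \<phi>1 z"
      using MVT2[of 0 "d/2" \<phi> \<phi>1] d d1 by auto
    moreover have "\<phi>1 z < 0" using pos \<open>0 < z\<close> \<open>z < d/2\<close> by simp
    moreover have "(d/2 - 0) * \<phi>1 z < 0" using d \<open>\<phi>1 z < 0\<close> by (simp add: mult_pos_neg)
    ultimately have "\<phi> (d/2) < \<phi> 0" by linarith
    thus False using mn[of "d/2"] by simp
  qed
qed

lemma sm_linear:
  assumes sm: "\<And>vs x. (D vs has_derivative (\<lambda>h. D (h#vs) x)) (at x)"
  shows "linear (\<lambda>h. D (h#vs) x)"
  using has_derivative_linear[OF sm] .

lemma sm_add_head: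
  assumes sm: "\<And>vs x. (D vs has_derivative (\<lambda>h. D (h#vs) x)) (at x)"
  shows "D ((a *\<^sub>R h + b *\<^sub>R k)#vs) x = a *\<^sub>R D (h#vs) x + b *\<^sub>R D (k#vs) x"
  using linear_add[OF sm_linear[OF sm, of vs x]] linear_scale[OF sm_linear[OF sm, of vs x]] by simp

lemma sm_add_second:
  assumes sm: "\<And>vs x. (D vs has_derivative (\<lambda>h. D (h#vs) x)) (at x)"
  shows "D (g # (a *\<^sub>R h + b *\<^sub>R k) # vs) x = a *\<^sub>R D (g#h#vs) x + b *\<^sub>R D (g#k#vs) x"
proof -
  have fe: "D ((a *\<^sub>R h + b *\<^sub>R k) # vs) = (\<lambda>y. a *\<^sub>R D (h#vs) y + b *\<^sub>R D (k#vs) y)"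
    using sm_add_head[OF sm] by auto
  have A: "((\<lambda>y. a *\<^sub>R D (h#vs) y + b *\<^sub>R D (k#vs) y) has_derivative
          (\<lambda>g. a *\<^sub>R D (g#h#vs) x + b *\<^sub>R D (g#k#vs) x)) (at x)"
    by (intro has_derivative_add has_derivative_scaleR_right sm)
  have B: "((\<lambda>y. a *\<^sub>R D (h#vs) y + b *\<^sub>R D (k#vs) y) has_derivative (\<lambda>g. D (g # (a *\<^sub>R h + b *\<^sub>R k) # vs) x)) (at x)"
    unfolding fe[symmetric] by (rule sm)
  have "(\<lambda>g. D (g # (a *\<^sub>R h + b *\<^sub>R k) # vs) x) = (\<lambda>g. a *\<^sub>R D (g#h#vs) x + b *\<^sub>R D (g#k#vs) x)"
    using has_derivative_unique[OF B A] .
  thus ?thesis by (rule fun_cong)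
qed

lemma sm_line:
  fixes D :: "'a::real_normed_vector list \<Rightarrow> 'a \<Rightarrow> 'b::real_inner"
  assumes sm: "\<And>vs x. (D vs has_derivative (\<lambda>h. D (h#vs) x)) (at x)"
  shows "((\<lambda>\<tau>. D vs (y + \<tau> *\<^sub>R h)) has_vector_derivative D (h#vs) (y + \<tau> *\<^sub>R h)) (at \<tau>)"
proof -
  have l: "((\<lambda>\<tau>. y + \<tau> *\<^sub>R h) has_derivative (\<lambda>d. d *\<^sub>R h)) (at \<tau>)"
    by (auto intro!: derivative_eq_intros)
  have "((\<lambda>\<tau>. D vs (y + \<tau> *\<^sub>R h)) has_derivative (\<lambda>d. D ((d *\<^sub>R h)#vs) (y + \<tau> *\<^sub>R h))) (at \<tau>)"
    using has_derivative_compose[OF l sm] .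
  moreover have "D ((d *\<^sub>R h)#vs) z = d *\<^sub>R D (h#vs) z" for d z
    using linear_scale[OF sm_linear[OF sm, of vs z]] by simp
  ultimately show ?thesis by (simp add: has_vector_derivative_def)
qed

lemma sm_line_inner:
  fixes D :: "'a::real_normed_vector list \<Rightarrow> 'a \<Rightarrow> 'b::real_inner"
  assumes sm: "\<And>vs x. (D vs has_derivative (\<lambda>h. D (h#vs) x)) (at x)"
  shows "((\<lambda>\<tau>. a \<bullet> D vs (y + \<tau> *\<^sub>R h)) has_real_derivative (a \<bullet> D (h#vs) (y + \<tau> *\<^sub>R h))) (at \<tau>)"
proof -
  have "((\<lambda>\<tau>. a \<bullet> D vs (y + \<tau> *\<^sub>R h)) has_vector_derivative (a \<bullet> D (h#vs) (y + \<tau> *\<^sub>R h))) (at \<tau>)"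
    using bounded_linear.has_vector_derivative[OF bounded_linear_inner_right sm_line[OF sm]] .
  thus ?thesis by (simp add: has_real_derivative_iff_has_vector_derivative)
qed

lemma sm_mixed_mvt:
  fixes D :: "'a::real_normed_vector list \<Rightarrow> 'a \<Rightarrow> 'b::real_inner"
  assumes sm: "\<And>vs x. (D vs has_derivative (\<lambda>h. D (h#vs) x)) (at x)"
    and s: "s > 0"
  shows "\<exists>\<tau> \<sigma>. 0 < \<tau> \<and> \<tau> < s \<and> 0 < \<sigma> \<and> \<sigma> < s \<and>
     a \<bullet> D [] (x + s *\<^sub>R h + s *\<^sub>R k) - a \<bullet> D [] (x + s *\<^sub>R h) - a \<bullet> D [] (x + s *\<^sub>R k) + a \<bullet> D [] x
       = s * s * (a \<bullet> D [k,h] (x + \<tau> *\<^sub>R h + \<sigma> *\<^sub>R k))"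
proof -
  define \<phi> where "\<phi> \<tau> = a \<bullet> D [] ((x + s *\<^sub>R k) + \<tau> *\<^sub>R h) - a \<bullet> D [] (x + \<tau> *\<^sub>R h)" for \<tau>
  define \<phi>1 where "\<phi>1 \<tau> = a \<bullet> D [h] ((x + s *\<^sub>R k) + \<tau> *\<^sub>R h) - a \<bullet> D [h] (x + \<tau> *\<^sub>R h)" for \<tau>
  have d\<phi>: "(\<phi> has_real_derivative \<phi>1 \<tau>) (at \<tau>)" for \<tau>
    unfolding \<phi>_def \<phi>1_def
    by (intro DERIV_diff sm_line_inner[OF sm])
  obtain \<tau> where \<tau>: "0 < \<tau>" "\<tau> < s" "\<phi> s - \<phi> 0 = (s - 0) * \<phi>1 \<tau>"
    using MVT2[of 0 s \<phi> \<phi>1] s d\<phi> by auto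
  define \<psi> where "\<psi> \<sigma> = a \<bullet> D [h] ((x + \<tau> *\<^sub>R h) + \<sigma> *\<^sub>R k)" for \<sigma>
  define \<psi>1 where "\<psi>1 \<sigma> = a \<bullet> D [k,h] ((x + \<tau> *\<^sub>R h) + \<sigma> *\<^sub>R k)" for \<sigma>
  have d\<psi>: "(\<psi> has_real_derivative \<psi>1 \<sigma>) (at \<sigma>)" for \<sigma>
    unfolding \<psi>_def \<psi>1_def by (rule sm_line_inner[OF sm])
  obtain \<sigma> where \<sigma>: "0 < \<sigma>" "\<sigma> < s" "\<psi> s - \<psi> 0 = (s - 0) * \<psi>1 \<sigma>"
    using MVT2[of 0 s \<psi> \<psi>1] s d\<psi> by auto
  have e1: "\<phi>1 \<tau> = \<psi> s - \<psi> 0"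
    unfolding \<phi>1_def \<psi>_def by (simp add: algebra_simps)
  have e2: "\<phi> s - \<phi> 0 = a \<bullet> D [] (x + s *\<^sub>R h + s *\<^sub>R k) - a \<bullet> D [] (x + s *\<^sub>R h) - a \<bullet> D [] (x + s *\<^sub>R k) + a \<bullet> D [] x"
    unfolding \<phi>_def by (simp add: algebra_simps)
  show ?thesis
    apply (rule exI[of _ \<tau>], rule exI[of _ \<sigma>])
    using \<tau> \<sigma> e1 e2 unfolding \<psi>1_def by simp
qed

lemma sm_schwarz:
  fixes D :: "'a::real_normed_vector list \<Rightarrow> 'a \<Rightarrow> 'b::real_inner"
  assumes sm: "\<And>vs x. (D vs has_derivative (\<lambda>h. D (h#vs) x)) (at x)"
  shows "D [h,k] x = D [k,h] x"
proof -
  have main: "a \<bullet> D [k,h] x = a \<bullet> D [h,k] x" for a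
  proof -
    have cont: "continuous (at x) (\<lambda>p. a \<bullet> D [u,v] p)" for u v
      by (intro continuous_intros has_derivative_continuous[OF sm])
    have bnd: "\<bar>a \<bullet> D [k,h] x - a \<bullet> D [h,k] x\<bar> < 2 * e" if e: "e > 0" for e
    proof -
      obtain d1 where d1: "d1 > 0" "\<And>p. dist p x < d1 \<Longrightarrow> dist (a \<bullet> D [k,h] p) (a \<bullet> D [k,h] x) < e"
        using cont[of k h, unfolded continuous_at_eps_delta] e by blast
      obtain d2 where d2: "d2 > 0" "\<And>p. dist p x < d2 \<Longrightarrow> dist (a \<bullet> D [h,k] p) (a \<bullet> D [h,k] x) < e"
        using cont[of h k, unfolded continuous_at_eps_delta] e by blast
      define d where "d = min d1 d2"
      define s where "s = d / (norm h + norm k + 1)"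
      have dpos: "d > 0" using d1 d2 by (simp add: d_def)
      have hk: "norm h + norm k + 1 > 0" by (simp add: add_nonneg_pos)
      have spos: "s > 0" using dpos hk by (simp add: s_def)
      have sd: "s * (norm h + norm k) < d"
      proof -
        have "s * (norm h + norm k + 1) = d" using hk by (simp add: s_def)
        thus ?thesis using spos by (simp add: algebra_simps)
      qed
      have small: "norm (\<tau> *\<^sub>R u + \<sigma> *\<^sub>R v) < d" if "0 < \<tau>" "\<tau> < s" "0 < \<sigma>" "\<sigma> < s"
          "(u = h \<and> v = k) \<or> (u = k \<and> v = h)" for \<tau> \<sigma> u v
      proof -
        have "norm (\<tau> *\<^sub>R u + \<sigma> *\<^sub>R v) \<le> \<tau> * norm u + \<sigma> * norm v"
          using norm_triangle_ineq[of "\<tau> *\<^sub>R u" "\<sigma> *\<^sub>R v"] that by simp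
        also have "\<dots> \<le> s * norm u + s * norm v"
          using that by (intro add_mono mult_right_mono) auto
        also have "\<dots> = s * (norm h + norm k)" using that(5) by (auto simp: algebra_simps)
        finally show ?thesis using sd by simp
      qed
      obtain \<tau>1 \<sigma>1 where A: "0 < \<tau>1" "\<tau>1 < s" "0 < \<sigma>1" "\<sigma>1 < s"
        "a \<bullet> D [] (x + s *\<^sub>R h + s *\<^sub>R k) - a \<bullet> D [] (x + s *\<^sub>R h) - a \<bullet> D [] (x + s *\<^sub>R k) + a \<bullet> D [] x
         = s * s * (a \<bullet> D [k,h] (x + \<tau>1 *\<^sub>R h + \<sigma>1 *\<^sub>R k))"
        using sm_mixed_mvt[OF sm spos, of a x h k] by blast
      obtain \<tau>2 \<sigma>2 where B: "0 < \<tau>2" "\<tau>2 < s" "0 < \<sigma>2" "\<sigma>2 < s"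
        "a \<bullet> D [] (x + s *\<^sub>R k + s *\<^sub>R h) - a \<bullet> D [] (x + s *\<^sub>R k) - a \<bullet> D [] (x + s *\<^sub>R h) + a \<bullet> D [] x
         = s * s * (a \<bullet> D [h,k] (x + \<tau>2 *\<^sub>R k + \<sigma>2 *\<^sub>R h))"
        using sm_mixed_mvt[OF sm spos, of a x k h] by blast
      have ee: "x + s *\<^sub>R k + s *\<^sub>R h = x + s *\<^sub>R h + s *\<^sub>R k" by (simp add: algebra_simps)
      have "s * s * (a \<bullet> D [k,h] (x + \<tau>1 *\<^sub>R h + \<sigma>1 *\<^sub>R k)) = s * s * (a \<bullet> D [h,k] (x + \<tau>2 *\<^sub>R k + \<sigma>2 *\<^sub>R h))"
        using A(5) B(5)[unfolded ee] by linarith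
      hence eq: "a \<bullet> D [k,h] (x + \<tau>1 *\<^sub>R h + \<sigma>1 *\<^sub>R k) = a \<bullet> D [h,k] (x + \<tau>2 *\<^sub>R k + \<sigma>2 *\<^sub>R h)"
        using spos by simp
      have "dist (x + \<tau>1 *\<^sub>R h + \<sigma>1 *\<^sub>R k) x < d1"
        using small[of \<tau>1 \<sigma>1 h k] A by (simp add: dist_norm d_def)
      hence e1: "dist (a \<bullet> D [k,h] (x + \<tau>1 *\<^sub>R h + \<sigma>1 *\<^sub>R k)) (a \<bullet> D [k,h] x) < e" by (rule d1(2))
      have "dist (x + \<tau>2 *\<^sub>R k + \<sigma>2 *\<^sub>R h) x < d2"
        using small[of \<tau>2 \<sigma>2 k h] B by (simp add: dist_norm d_def)
      hence e2: "dist (a \<bullet> D [h,k] (x + \<tau>2 *\<^sub>R k + \<sigma>2 *\<^sub>R h)) (a \<bullet> D [h,k] x) < e" by (rule d2(2))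
      show ?thesis using e1 e2 eq by (simp add: dist_real_def)
    qed
    show ?thesis
    proof (rule ccontr)
      assume ne: "a \<bullet> D [k,h] x \<noteq> a \<bullet> D [h,k] x"
      have "\<bar>a \<bullet> D [k,h] x - a \<bullet> D [h,k] x\<bar> < 2 * (\<bar>a \<bullet> D [k,h] x - a \<bullet> D [h,k] x\<bar> / 4)"
        using ne by (intro bnd) simp
      thus False by simp
    qed
  qed
  have "(D [k,h] x - D [h,k] x) \<bullet> (D [k,h] x - D [h,k] x) = 0"
    using main[of "D [k,h] x - D [h,k] x"] by (simp add: inner_diff_left inner_diff_right inner_commute)
  thus ?thesis by simp
qed

lemma psd2:
  fixes p q r :: real
  assumes "\<And>x y. p * x^2 + 2 * q * x * y + r * y^2 \<ge> 0"
  shows "p \<ge> 0" "r \<ge> 0" "q^2 \<le> p * r"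
proof -
  show p: "p \<ge> 0" using assms[of 1 0] by simp
  show r: "r \<ge> 0" using assms[of 0 1] by simp
  show "q^2 \<le> p * r"
  proof (cases "p = 0")
    case True
    have "q = 0"
    proof (rule ccontr)
      assume "q \<noteq> 0"
      hence "q^2 > 0" by simp
      have "p * (-(r+1)/(2*q))^2 + 2 * q * (-(r+1)/(2*q)) * 1 + r * 1^2 \<ge> 0" by (rule assms)
      also have "p * (-(r+1)/(2*q))^2 + 2 * q * (-(r+1)/(2*q)) * 1 + r * 1^2 = -1"
        using True \<open>q \<noteq> 0\<close> by (simp add: field_simps)
      finally show False by simp
    qed
    thus ?thesis using True by simp
  next
    case False
    hence pp: "p > 0" using p by simp
    have "p * (-q)^2 + 2 * q * (-q) * p + r * p^2 \<ge> 0" by (rule assms)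
    hence "p * (p * r - q^2) \<ge> 0" by (simp add: power2_eq_square algebra_simps)
    thus ?thesis using pp by (simp add: zero_le_mult_iff)
  qed
qed

lemma psd2_det:
  fixes a b c p q r :: real
  assumes P: "\<And>x y. p * x^2 + 2 * q * x * y + r * y^2 \<ge> 0"
    and Q: "\<And>x y. (a - p) * x^2 + 2 * (b - q) * x * y + (c - r) * y^2 \<ge> 0"
  shows "p * r - q^2 \<le> a * c - b^2"
proof -
  define \<alpha> \<beta> \<gamma> where "\<alpha> = a - p" "\<beta> = b - q" "\<gamma> = c - r"
  have Pp: "p \<ge> 0" "r \<ge> 0" "q^2 \<le> p * r" using psd2[OF P] by auto
  have Qp: "\<alpha> \<ge> 0" "\<gamma> \<ge> 0" "\<beta>^2 \<le> \<alpha> * \<gamma>" using psd2[of \<alpha> \<beta> \<gamma>] Q unfolding \<alpha>_\<beta>_\<gamma>_def by auto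
  have X0: "p * \<gamma> + \<alpha> * r \<ge> 0" using Pp Qp by simp
  have "(p * \<gamma> + \<alpha> * r)^2 \<ge> 4 * (p * r) * (\<alpha> * \<gamma>)"
  proof -
    have "(p * \<gamma> - \<alpha> * r)^2 \<ge> 0" by simp
    thus ?thesis by (simp add: power2_eq_square algebra_simps)
  qed
  moreover have "4 * (p * r) * (\<alpha> * \<gamma>) \<ge> 4 * q^2 * \<beta>^2"
  proof -
    have "q^2 * \<beta>^2 \<le> (p * r) * (\<alpha> * \<gamma>)"
      using Pp(3) Qp(3) by (rule mult_mono) (use Pp Qp in auto)
    thus ?thesis by simp
  qed
  ultimately have "(p * \<gamma> + \<alpha> * r)^2 \<ge> (2 * q * \<beta>)^2" by (simp add: power_mult_distrib)
  hence "2 * q * \<beta> \<le> p * \<gamma> + \<alpha> * r"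
    using X0 power2_le_imp_le by blast
  moreover have "\<alpha> * \<gamma> - \<beta>^2 \<ge> 0" using Qp by simp
  ultimately have "p * r - q^2 \<le> (p + \<alpha>) * (r + \<gamma>) - (q + \<beta>)^2"
    by (simp add: power2_eq_square algebra_simps)
  thus ?thesis unfolding \<alpha>_\<beta>_\<gamma>_def by simp
qed

lemma norm3_sq: "(norm (x::real^3))^2 = x$1^2 + x$2^2 + x$3^2"
  unfolding power2_norm_eq_inner by (simp add: inner_vec_def sum_3 power2_eq_square)

lemma norm2_sq: "(norm (x::real^2))^2 = x$1^2 + x$2^2"
  unfolding power2_norm_eq_inner by (simp add: inner_vec_def sum_2 power2_eq_square)

lemma chartN_S2: "chartN w \<in> S2"
proof -
  define s where "s = (w$1)^2 + (w$2)^2"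
  have s0: "1 + s > 0" unfolding s_def by (simp add: add_pos_nonneg)
  have "(norm (chartN w))^2 = (2 * w$1 / (1 + s))^2 + (2 * w$2 / (1 + s))^2 + ((s - 1) / (1 + s))^2"
    by (simp add: norm3_sq chartN_def Let_def s_def)
  also have "\<dots> = (4 * ((w$1)^2 + (w$2)^2) + (s - 1)^2) / (1 + s)^2"
    by (simp only: power_divide add_divide_distrib[symmetric] power_mult_distrib) (simp add: algebra_simps)
  also have "\<dots> = (4 * s + (s - 1)^2) / (1 + s)^2" by (simp add: s_def)
  also have "\<dots> = 1"
  proof -
    have "4 * s + (s - 1)^2 = (1 + s)^2" by (simp add: power2_eq_square algebra_simps)
    thus ?thesis using s0 by simp
  qed
  finally show ?thesis using norm_ge_zero[of "chartN w"] norm_ge_zero[of "chartS w"] by (auto simp add: power2_eq_1_iff)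
qed

lemma chartS_S2: "chartS w \<in> S2"
proof -
  define s where "s = (w$1)^2 + (w$2)^2"
  have s0: "1 + s > 0" unfolding s_def by (simp add: add_pos_nonneg)
  have "(norm (chartS w))^2 = (2 * w$1 / (1 + s))^2 + (2 * w$2 / (1 + s))^2 + ((1 - s) / (1 + s))^2"
    by (simp add: norm3_sq chartS_def Let_def s_def)
  also have "\<dots> = (4 * ((w$1)^2 + (w$2)^2) + (1 - s)^2) / (1 + s)^2"
    by (simp only: power_divide add_divide_distrib[symmetric] power_mult_distrib) (simp add: algebra_simps)
  also have "\<dots> = (4 * s + (1 - s)^2) / (1 + s)^2" by (simp add: s_def)
  also have "\<dots> = 1"
  proof -
    have "4 * s + (1 - s)^2 = (1 + s)^2" by (simp add: power2_eq_square algebra_simps)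
    thus ?thesis using s0 by simp
  qed
  finally show ?thesis using norm_ge_zero[of "chartN w"] norm_ge_zero[of "chartS w"] by (auto simp add: power2_eq_1_iff)
qed

lemma charts_S2: "\<sigma> \<in> charts \<Longrightarrow> \<sigma> w \<in> S2"
  using chartN_S2 chartS_S2 by (auto simp: charts_def)

lemma charts_cover: 
  assumes "p \<in> S2"
  shows "\<exists>\<sigma>\<in>charts. \<exists>w. norm w \<le> 1 \<and> \<sigma> w = p"
proof -
  have p1: "p$1^2 + p$2^2 + p$3^2 = 1" using assms norm3_sq[of p] by simp
  show ?thesis
  proof (cases "p$3 \<le> 0")
    case True
    define d where "d = 1 - p$3"
    have d: "d > 0" "d \<ge> 1" using True by (auto simp: d_def)
    define w :: "real^2" where "w = vector [p$1 / d, p$2 / d]"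
    have s: "(w$1)^2 + (w$2)^2 = (1 + p$3) / d"
    proof -
      have "(w$1)^2 + (w$2)^2 = (p$1^2 + p$2^2) / d^2" by (simp add: w_def power_divide add_divide_distrib)
      also have "\<dots> = (1 - p$3^2) / d^2" using p1 by (simp add: algebra_simps)
      also have "\<dots> = ((1 + p$3) * d) / (d * d)" by (simp add: d_def power2_eq_square algebra_simps)
      also have "\<dots> = (1 + p$3) / d" using d by simp
      finally show ?thesis .
    qed
    have s1: "1 + (1 + p$3) / d = 2 / d" using d by (simp add: d_def field_simps)
    have "chartN w = p"
      unfolding chartN_def Let_def s s1
      using d by (auto simp: vec_eq_iff forall_3 w_def field_simps d_def)
    moreover have "norm w \<le> 1"
    proof -
      have "(norm w)^2 \<le> 1" unfolding norm2_sq s using d True by (simp add: d_def field_simps)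
      thus ?thesis by (simp add: power_le_one_iff)
    qed
    ultimately show ?thesis by (auto simp: charts_def)
  next
    case False
    define d where "d = 1 + p$3"
    have d: "d > 0" "d \<ge> 1" using False by (auto simp: d_def)
    define w :: "real^2" where "w = vector [p$1 / d, p$2 / d]"
    have s: "(w$1)^2 + (w$2)^2 = (1 - p$3) / d"
    proof -
      have "(w$1)^2 + (w$2)^2 = (p$1^2 + p$2^2) / d^2" by (simp add: w_def power_divide add_divide_distrib)
      also have "\<dots> = (1 - p$3^2) / d^2" using p1 by (simp add: algebra_simps)
      also have "\<dots> = ((1 - p$3) * d) / (d * d)" by (simp add: d_def power2_eq_square algebra_simps)
      also have "\<dots> = (1 - p$3) / d" using d by simp
      finally show ?thesis .
    qed
    have s1: "1 + (1 - p$3) / d = 2 / d" using d by (simp add: d_def field_simps)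
    have "chartS w = p"
      unfolding chartS_def Let_def s s1
      using d by (auto simp: vec_eq_iff forall_3 w_def field_simps d_def)
    moreover have "norm w \<le> 1"
    proof -
      have "(norm w)^2 \<le> 1" unfolding norm2_sq s using d False by (simp add: d_def field_simps)
      thus ?thesis by (simp add: power_le_one_iff)
    qed
    ultimately show ?thesis by (auto simp: charts_def)
  qed
qed

lemma conn_inside:
  assumes "connected T" "T \<inter> S = {}" "x \<in> T" "x \<in> inside S"
  shows "T \<subseteq> inside S"
proof
  fix y assume y: "y \<in> T"
  have sub: "T \<subseteq> connected_component_set (- S) x"
    using assms by (intro connected_component_maximal) auto
  hence "connected_component_set (- S) y = connected_component_set (- S) x"
    using y by (intro connected_component_eq) auto
  moreover have "bounded (connected_component_set (- S) x)" using assms(4) by (simp add: inside_def)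
  ultimately show "y \<in> inside S" using y assms(2) by (auto simp: inside_def)
qed

lemma ray_hits:
  fixes x e :: "'a::real_normed_vector"
  assumes "x \<in> inside S" "e \<noteq> 0"
  shows "\<exists>l\<ge>0. x + l *\<^sub>R e \<in> S"
proof (rule ccontr)
  assume na: "\<not> (\<exists>l\<ge>0. x + l *\<^sub>R e \<in> S)"
  define R where "R = (\<lambda>l. x + l *\<^sub>R e) ` {0..}"
  have "connected R" unfolding R_def
    by (intro connected_continuous_image continuous_intros) (simp add: is_interval_connected)
  moreover have "R \<inter> S = {}" using na by (auto simp: R_def)
  moreover have "x \<in> R" unfolding R_def by (rule image_eqI[of _ _ 0]) auto
  ultimately have "R \<subseteq> inside S" using conn_inside assms(1) by metis
  hence "R \<subseteq> connected_component_set (- S) x"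
    using \<open>connected R\<close> \<open>R \<inter> S = {}\<close> \<open>x \<in> R\<close> by (intro connected_component_maximal) auto
  hence "bounded R" using assms(1) bounded_subset by (auto simp: inside_def)
  then obtain B where B: "\<And>y. y \<in> R \<Longrightarrow> norm y \<le> B" by (auto simp: bounded_iff)
  define l where "l = (B + norm x + 1) / norm e"
  have Bx: "0 \<le> B + norm x + 1" using B[of x] \<open>x \<in> R\<close> norm_ge_zero[of x] by linarith
  hence l0: "l \<ge> 0" using assms(2) unfolding l_def by simp
  have "x + l *\<^sub>R e \<in> R" unfolding R_def using l0 by auto
  hence "norm (x + l *\<^sub>R e) \<le> B" by (rule B)
  moreover have "norm (l *\<^sub>R e) - norm x \<le> norm (x + l *\<^sub>R e)"
    using norm_triangle_ineq4[of "x + l *\<^sub>R e" x] by simp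
  moreover have "norm (l *\<^sub>R e) = B + norm x + 1" using Bx assms(2) by (simp add: l_def)
  ultimately show False by simp
qed

lemma inside_from_support:
  fixes M :: "'a::euclidean_space set"
  assumes "compact M" "convex (M \<union> inside M)" "c \<notin> M"
    and sup: "\<And>e. norm e = 1 \<Longrightarrow> \<exists>y\<in>M. e \<bullet> (y - c) > 0"
  shows "c \<in> inside M"
proof -
  have "c \<in> convex hull M"
  proof (rule ccontr)
    assume nc: "c \<notin> convex hull M"
    have "closed (convex hull M)" using assms(1) by (simp add: compact_convex_hull compact_imp_closed)
    then obtain a b where ab: "a \<bullet> c < b" "\<And>x. x \<in> convex hull M \<Longrightarrow> a \<bullet> x > b"
      using separating_hyperplane_closed_point[OF convex_convex_hull _ nc] by blast
    define e0 :: 'a where "e0 = (SOME i. i \<in> Basis)"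
    have "norm e0 = 1" unfolding e0_def by (simp add: SOME_Basis)
    then obtain y0 where "y0 \<in> M" using sup by blast
    have "a \<noteq> 0"
    proof
      assume "a = 0"
      thus False using ab(1) ab(2)[of y0] \<open>y0 \<in> M\<close> hull_inc[of y0 M convex] by simp
    qed
    define e where "e = - (1 / norm a) *\<^sub>R a"
    have "norm e = 1" using \<open>a \<noteq> 0\<close> by (simp add: e_def)
    then obtain y where y: "y \<in> M" "e \<bullet> (y - c) > 0" using sup by blast
    have "e \<bullet> (y - c) = - (a \<bullet> y - a \<bullet> c) / norm a" by (simp add: e_def inner_diff_right diff_divide_distrib)
    hence "a \<bullet> y < a \<bullet> c" using y(2) \<open>a \<noteq> 0\<close> by (simp add: zero_less_divide_iff)
    thus False using ab(1) ab(2)[of y] y(1) hull_inc[of y M convex] by simp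
  qed
  moreover have "convex hull M \<subseteq> M \<union> inside M"
    using assms(2) by (intro hull_minimal) auto
  ultimately show ?thesis using assms(3) by auto
qed

lemma unit_orth_pm:
  fixes a b x z :: "real^3"
  assumes "cross3 a b \<noteq> 0" "norm x = 1" "norm z = 1"
    "x \<bullet> a = 0" "x \<bullet> b = 0" "z \<bullet> a = 0" "z \<bullet> b = 0"
  shows "z = x \<or> z = - x"
proof -
  define N where "N = cross3 a b"
  have par: "\<exists>l. y = l *\<^sub>R N" if "y \<bullet> a = 0" "y \<bullet> b = 0" for y
  proof -
    have "cross3 N y = (a \<bullet> y) *\<^sub>R b - (b \<bullet> y) *\<^sub>R a"
      unfolding N_def by (simp add: cross3_simps forall_3)
    hence "cross3 N y = 0" using that by (simp add: inner_commute)
    hence "collinear {0, N, y}" by (simp add: cross_eq_0)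
    thus ?thesis using assms(1) by (auto simp: collinear_lemma N_def)
  qed
  obtain l where l: "x = l *\<^sub>R N" using par assms by blast
  obtain m where m: "z = m *\<^sub>R N" using par assms by blast
  have "\<bar>l\<bar> * norm N = 1" "\<bar>m\<bar> * norm N = 1" using l m assms(2,3) by auto
  hence "\<bar>l\<bar> = \<bar>m\<bar>" using assms(1) by (metis N_def mult_right_cancel norm_eq_zero)
  hence "m = l \<or> m = - l" by auto
  thus ?thesis using l m by auto
qed

lemma inner_deriv:
  fixes f g :: "real \<Rightarrow> 'a::real_inner"
  assumes "(f has_vector_derivative f') (at s)" "(g has_vector_derivative g') (at s)"
  shows "((\<lambda>s. f s \<bullet> g s) has_real_derivative (f s \<bullet> g' + f' \<bullet> g s)) (at s)"
proof -
  have "((\<lambda>s. f s \<bullet> g s) has_derivative (\<lambda>d. f s \<bullet> (d *\<^sub>R g') + (d *\<^sub>R f') \<bullet> g s)) (at s)"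
    using has_derivative_inner[OF assms(1)[unfolded has_vector_derivative_def] assms(2)[unfolded has_vector_derivative_def]] .
  moreover have "(\<lambda>d. f s \<bullet> (d *\<^sub>R g') + (d *\<^sub>R f') \<bullet> g s) = (*) (f s \<bullet> g' + f' \<bullet> g s)"
    by (rule ext) (simp add: algebra_simps)
  ultimately show ?thesis by (simp add: has_field_derivative_def)
qed

lemma vec2_decomp: "x *\<^sub>R axis 1 1 + y *\<^sub>R axis 2 1 = (vector [x, y] :: real^2)"
  by (simp add: vec_eq_iff forall_2 axis_def)

lemma geom_min:
  fixes \<Phi> :: "real^3 \<Rightarrow> real^3" and \<sigma> :: "real^2 \<Rightarrow> real^3"
  assumes csc: "closed_strictly_convex \<Phi>" and \<sigma>: "\<sigma> \<in> charts"
    and cin: "c \<in> inside (\<Phi> ` S2)"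
    and mn: "\<And>p. p \<in> S2 \<Longrightarrow> norm (\<Phi> (\<sigma> w0) - c) \<le> norm (\<Phi> p - c)"
    and on: "is_outer_normal \<Phi> \<sigma> w0 n"
  shows "norm (\<Phi> (\<sigma> w0) - c) > 0 \<and> n = (1 / norm (\<Phi> (\<sigma> w0) - c)) *\<^sub>R (\<Phi> (\<sigma> w0) - c) \<and>
         gauss_curv_chart (\<Phi> \<circ> \<sigma>) w0 * (norm (\<Phi> (\<sigma> w0) - c))^2 \<le> 1"
proof -
  define M where "M = \<Phi> ` S2"
  define Y where "Y = \<Phi> \<circ> \<sigma>"
  define Y0 where "Y0 = Y w0"
  define r where "r = norm (Y0 - c)"
  define u where "u = (1/r) *\<^sub>R (Y0 - c)"
  have YM: "Y w \<in> M" for w using charts_S2[OF \<sigma>] by (simp add: Y_def M_def)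
  have cnM: "c \<notin> M" using cin inside_no_overlap unfolding M_def by blast
  have r0: "r > 0" using YM[of w0] cnM by (auto simp: r_def Y0_def)
  have Y0c: "Y0 - c = r *\<^sub>R u" using r0 by (simp add: u_def)
  have nu: "norm u = 1" using r0 by (simp add: u_def r_def)
  have mn': "r \<le> norm (y - c)" if "y \<in> M" for y
    using mn that by (auto simp: M_def r_def Y0_def Y_def)
  have sY: "smooth_on UNIV Y" and crossnz: "\<And>w. cross3 (pd Y 1 w) (pd Y 2 w) \<noteq> 0"
    and Kpos: "\<And>w. gauss_curv_chart Y w > 0" and conv: "convex (M \<union> inside M)"
    using csc \<sigma> unfolding closed_strictly_convex_def Y_def M_def by auto
  obtain D where D0: "\<And>x. D [] x = Y x" and sm: "\<And>vs x. (D vs has_derivative (\<lambda>h. D (h#vs) x)) (at x)"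
    using sY unfolding smooth_on_def by auto
  have YD: "Y = D []" using D0 by auto
  have pdfun: "pd Y i = D [axis i 1]" for i
  proof
    fix w
    have "frechet_derivative (D []) (at w) = (\<lambda>h. D [h] w)"
      using frechet_derivative_at[OF sm[of "[]" w]] by simp
    thus "pd Y i w = D [axis i 1] w" by (simp add: pd_def YD)
  qed
  have pd2D: "pd2 Y i j w = D [axis j 1, axis i 1] w" for i j w
  proof -
    have "frechet_derivative (D [axis i 1]) (at w) = (\<lambda>h. D [h, axis i 1] w)"
      using frechet_derivative_at[OF sm[of "[axis i 1]" w]] by simp
    thus ?thesis by (simp add: pd2_def pdfun)
  qed
  have ballM: "ball c r \<inter> M = {}"
    using mn' by (force simp: dist_norm norm_minus_commute)
  have ballin: "ball c r \<subseteq> inside M"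
    using conn_inside[OF connected_ball ballM _ cin[folded M_def]] r0 by auto
  obtain b where b0: "b > 0" and bout: "\<And>s. 0 < s \<Longrightarrow> s < b \<Longrightarrow> Y0 + s *\<^sub>R n \<in> outside M"
    using on unfolding is_outer_normal_def eventually_at_right_field
    by (auto simp: Y0_def Y_def M_def)
  have nn1: "norm n = 1" and nY1: "n \<bullet> pd Y 1 w0 = 0" and nY2: "n \<bullet> pd Y 2 w0 = 0"
    using on unfolding is_outer_normal_def Y_def by auto
  define C where "C = M \<union> inside M"
  have outC: "outside M \<inter> C = {}" unfolding C_def using inside_Int_outside outside_no_overlap by blast
  have notint: "Y0 \<notin> interior C"
  proof
    assume "Y0 \<in> interior C"
    then obtain e where e: "e > 0" "ball Y0 e \<subseteq> C" by (auto simp: mem_interior)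
    define s where "s = min b e / 2"
    have s: "0 < s" "s < b" "s < e" using b0 e by (auto simp: s_def)
    have "Y0 + s *\<^sub>R n \<in> ball Y0 e" using s nn1 by (simp add: dist_norm)
    hence "Y0 + s *\<^sub>R n \<in> C" using e by auto
    moreover have "Y0 + s *\<^sub>R n \<in> outside M" using bout s by auto
    ultimately show False using outC by auto
  qed
  have cint: "c \<in> interior C"
    using ballin r0 unfolding C_def mem_interior by (intro exI[of _ r]) auto
  have relint: "rel_interior C = interior C"
    using cint by (intro rel_interior_nonempty_interior) auto
  have Y0C: "Y0 \<in> closure C" using YM[of w0] closure_subset unfolding C_def Y0_def by auto
  have "Y0 \<notin> rel_interior C" using notint relint by simp
  then obtain a where a0: "a \<noteq> 0" and asup: "\<And>y. y \<in> closure C \<Longrightarrow> a \<bullet> Y0 \<le> a \<bullet> y"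
    using supporting_hyperplane_relative_frontier[OF conv[folded C_def] Y0C] by metis
  define uh where "uh = - (1 / norm a) *\<^sub>R a"
  have uh1: "norm uh = 1" using a0 by (simp add: uh_def)
  have uhsup: "uh \<bullet> y \<le> uh \<bullet> Y0" if "y \<in> closure C" for y
  proof -
    have "a \<bullet> Y0 \<le> a \<bullet> y" using asup that .
    hence "(a \<bullet> Y0) / norm a \<le> (a \<bullet> y) / norm a" using a0 by (simp add: divide_right_mono)
    thus ?thesis by (simp add: uh_def)
  qed
  have "cball c r \<subseteq> closure C"
  proof -
    have "closure (ball c r) \<subseteq> closure C" using ballin by (intro closure_mono) (auto simp: C_def)
    thus ?thesis using r0 by simp
  qed
  hence "c + r *\<^sub>R uh \<in> closure C" using uh1 r0 by (auto simp: dist_norm)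
  hence "uh \<bullet> (c + r *\<^sub>R uh) \<le> uh \<bullet> Y0" by (rule uhsup)
  moreover have Y0eq: "Y0 = c + r *\<^sub>R u" using Y0c by (simp add: algebra_simps)
  ultimately have "uh \<bullet> c + r * (uh \<bullet> uh) \<le> uh \<bullet> c + r * (uh \<bullet> u)"
    by (simp add: inner_add_right)
  hence "r * 1 \<le> r * (uh \<bullet> u)" using uh1 by (simp add: dot_square_norm)
  hence uhu: "uh \<bullet> u \<ge> 1" using r0 by simp
  have "(norm (uh - u))^2 = uh \<bullet> uh - 2 * (uh \<bullet> u) + u \<bullet> u"
    unfolding power2_norm_eq_inner by (simp add: inner_diff_left inner_diff_right inner_commute)
  also have "uh \<bullet> uh = 1" using uh1 by (simp add: dot_square_norm)
  also have "u \<bullet> u = 1" using nu by (simp add: dot_square_norm)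
  finally have "(norm (uh - u))^2 = 2 - 2 * (uh \<bullet> u)" by simp
  hence "(norm (uh - u))^2 \<le> 0" using uhu by simp
  hence "(norm (uh - u))^2 = 0" using zero_le_power2[of "norm (uh - u)"] by linarith
  hence "uh = u" by simp
  hence usup: "u \<bullet> Y w \<le> u \<bullet> Y0" for w
    using uhsup[of "Y w"] YM[of w] closure_subset by (auto simp: C_def)
  have so1: "u \<bullet> D [v] w0 = 0 \<and> u \<bullet> D [v,v] w0 \<le> 0" for v
  proof -
    have d1: "((\<lambda>s. - (u \<bullet> D [] (w0 + s *\<^sub>R v))) has_real_derivative - (u \<bullet> D [v] (w0 + s *\<^sub>R v))) (at s)" for s
      by (intro DERIV_minus sm_line_inner[OF sm])
    have d2: "((\<lambda>s. - (u \<bullet> D [v] (w0 + s *\<^sub>R v))) has_real_derivative - (u \<bullet> D [v,v] (w0 + 0 *\<^sub>R v))) (at 0)"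
      by (intro DERIV_minus sm_line_inner[OF sm])
    have m: "- (u \<bullet> D [] (w0 + 0 *\<^sub>R v)) \<le> - (u \<bullet> D [] (w0 + s *\<^sub>R v))" for s
      using usup[of "w0 + s *\<^sub>R v"] by (simp add: D0 Y0_def)
    from second_order_min[OF d1 d2 m] show ?thesis by simp
  qed
  have so2: "D [v] w0 \<bullet> D [v] w0 + r * (u \<bullet> D [v,v] w0) \<ge> 0" for v
  proof -
    have gv: "((\<lambda>s. D [] (w0 + s *\<^sub>R v) - c) has_vector_derivative D [v] (w0 + s *\<^sub>R v)) (at s)" for s
      using has_vector_derivative_diff[OF sm_line[OF sm, of "[]" w0 v s] has_vector_derivative_const[of c]] by simp
    have d1: "((\<lambda>s. (D [] (w0 + s *\<^sub>R v) - c) \<bullet> (D [] (w0 + s *\<^sub>R v) - c)) has_real_derivative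
              2 * ((D [] (w0 + s *\<^sub>R v) - c) \<bullet> D [v] (w0 + s *\<^sub>R v))) (at s)" for s
      using inner_deriv[OF gv gv] by (simp add: inner_commute)
    have d2: "((\<lambda>s. 2 * ((D [] (w0 + s *\<^sub>R v) - c) \<bullet> D [v] (w0 + s *\<^sub>R v))) has_real_derivative
              2 * ((D [] (w0 + 0 *\<^sub>R v) - c) \<bullet> D [v, v] (w0 + 0 *\<^sub>R v) + D [v] (w0 + 0 *\<^sub>R v) \<bullet> D [v] (w0 + 0 *\<^sub>R v))) (at 0)"
      by (intro DERIV_cmult inner_deriv gv sm_line[OF sm])
    have m: "(D [] (w0 + 0 *\<^sub>R v) - c) \<bullet> (D [] (w0 + 0 *\<^sub>R v) - c) \<le> (D [] (w0 + s *\<^sub>R v) - c) \<bullet> (D [] (w0 + s *\<^sub>R v) - c)" for s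
    proof -
      have "r \<le> norm (D [] (w0 + s *\<^sub>R v) - c)" using mn' YM by (simp add: D0)
      hence "r^2 \<le> (norm (D [] (w0 + s *\<^sub>R v) - c))^2" using r0 by (simp add: power_mono)
      moreover have "(D [] (w0 + 0 *\<^sub>R v) - c) = Y0 - c" by (simp add: D0 Y0_def)
      ultimately show ?thesis by (simp add: power2_norm_eq_inner[symmetric] r_def)
    qed
    from second_order_min(2)[OF d1 d2 m] have "0 \<le> (Y0 - c) \<bullet> D [v, v] w0 + D [v] w0 \<bullet> D [v] w0"
      by (simp add: D0 Y0_def)
    thus ?thesis by (simp add: Y0c)
  qed
  define e1 e2 where "e1 = (axis 1 1 :: real^2)" and "e2 = (axis 2 1 :: real^2)"
  define Y1 Y2 Y11 Y12 Y22 where "Y1 = D [e1] w0" and "Y2 = D [e2] w0" and "Y11 = D [e1,e1] w0"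
    and "Y12 = D [e2,e1] w0" and "Y22 = D [e2,e2] w0"
  have Dv: "D [x *\<^sub>R e1 + y *\<^sub>R e2] w0 = x *\<^sub>R Y1 + y *\<^sub>R Y2" for x y
    using sm_add_head[OF sm, of x e1 y e2 "[]" w0] by (simp add: Y1_def Y2_def)
  have Dvv: "D [x *\<^sub>R e1 + y *\<^sub>R e2, x *\<^sub>R e1 + y *\<^sub>R e2] w0 = (x*x) *\<^sub>R Y11 + ((x*y) *\<^sub>R Y12 + (x*y) *\<^sub>R Y12) + (y*y) *\<^sub>R Y22" for x y
  proof -
    define v where "v = x *\<^sub>R e1 + y *\<^sub>R e2"
    have "D [v, v] w0 = x *\<^sub>R D [e1, v] w0 + y *\<^sub>R D [e2, v] w0"
      using sm_add_head[OF sm, of x e1 y e2 "[v]" w0] by (simp add: v_def)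
    also have "D [e1, v] w0 = x *\<^sub>R D [e1, e1] w0 + y *\<^sub>R D [e1, e2] w0"
      using sm_add_second[OF sm, of e1 x e1 y e2 "[]" w0] by (simp add: v_def)
    also have "D [e2, v] w0 = x *\<^sub>R D [e2, e1] w0 + y *\<^sub>R D [e2, e2] w0"
      using sm_add_second[OF sm, of e2 x e1 y e2 "[]" w0] by (simp add: v_def)
    also have "D [e1, e2] w0 = D [e2, e1] w0" by (rule sm_schwarz[OF sm])
    finally show ?thesis by (simp add: v_def Y11_def Y12_def Y22_def scaleR_add_right mult.commute add_ac)
  qed
  define E F G l m nn where "E = Y1 \<bullet> Y1" and "F = Y1 \<bullet> Y2" and "G = Y2 \<bullet> Y2"
    and "l = u \<bullet> Y11" and "m = u \<bullet> Y12" and "nn = u \<bullet> Y22"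
  have Q1: "(-(r*l)) * x^2 + 2 * (-(r*m)) * x * y + (-(r*nn)) * y^2 \<ge> 0" for x y
  proof -
    have "u \<bullet> D [x *\<^sub>R e1 + y *\<^sub>R e2, x *\<^sub>R e1 + y *\<^sub>R e2] w0 \<le> 0" using so1 by blast
    hence "l * x^2 + 2 * m * x * y + nn * y^2 \<le> 0"
      unfolding Dvv by (simp only: inner_add_right inner_scaleR_right) (simp add: l_def m_def nn_def power2_eq_square algebra_simps)
    hence "r * (l * x^2 + 2 * m * x * y + nn * y^2) \<le> 0" using r0 by (simp add: mult_nonneg_nonpos)
    thus ?thesis by (simp add: algebra_simps)
  qed
  have Q2: "(E - (-(r*l))) * x^2 + 2 * (F - (-(r*m))) * x * y + (G - (-(r*nn))) * y^2 \<ge> 0" for x y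
  proof -
    have "0 \<le> D [x *\<^sub>R e1 + y *\<^sub>R e2] w0 \<bullet> D [x *\<^sub>R e1 + y *\<^sub>R e2] w0 + r * (u \<bullet> D [x *\<^sub>R e1 + y *\<^sub>R e2, x *\<^sub>R e1 + y *\<^sub>R e2] w0)"
      by (rule so2)
    also have "\<dots> = (E - (-(r*l))) * x^2 + 2 * (F - (-(r*m))) * x * y + (G - (-(r*nn))) * y^2"
      unfolding Dv Dvv
      by (simp only: inner_add_right inner_add_left inner_scaleR_right inner_scaleR_left)
        (simp add: inner_commute E_def F_def G_def l_def m_def nn_def power2_eq_square algebra_simps)
    finally show ?thesis .
  qed
  have det: "(-(r*l)) * (-(r*nn)) - (-(r*m))^2 \<le> E * G - F^2"
    by (rule psd2_det[OF Q1 Q2])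
  have uY1: "u \<bullet> Y1 = 0" using so1[of e1] by (simp add: Y1_def)
  have uY2: "u \<bullet> Y2 = 0" using so1[of e2] by (simp add: Y2_def)
  have pdY: "pd Y 1 w0 = Y1" "pd Y 2 w0 = Y2" by (simp_all add: pdfun Y1_def Y2_def e1_def e2_def)
  have cr: "cross3 Y1 Y2 \<noteq> 0" using crossnz[of w0] pdY by simp
  have npm: "n = u \<or> n = - u"
    using unit_orth_pm[OF cr nu nn1 uY1 uY2] nY1 nY2 pdY by simp
  have nu_eq: "n = u"
  proof (rule ccontr)
    assume "n \<noteq> u"
    hence nmu: "n = - u" using npm by simp
    define s where "s = min b r / 2"
    have s: "0 < s" "s < b" "s < r" using b0 r0 by (auto simp: s_def)
    have "Y0 + s *\<^sub>R n = c + (r - s) *\<^sub>R u" using nmu Y0eq by (simp add: algebra_simps)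
    moreover have "dist c (c + (r - s) *\<^sub>R u) < r" using s nu by (simp add: dist_norm)
    ultimately have "Y0 + s *\<^sub>R n \<in> inside M" using ballin by auto
    moreover have "Y0 + s *\<^sub>R n \<in> outside M" using bout s by auto
    ultimately show False using inside_Int_outside by blast
  qed
  define cr3 where "cr3 = cross3 Y1 Y2"
  define N' where "N' = (1 / norm cr3) *\<^sub>R cr3"
  have N'1: "norm N' = 1" using cr by (simp add: N'_def cr3_def)
  have N'o: "N' \<bullet> Y1 = 0" "N' \<bullet> Y2 = 0" by (simp_all add: N'_def cr3_def dot_cross_self)
  have Npm: "N' = u \<or> N' = - u" using unit_orth_pm[OF cr nu N'1 uY1 uY2 N'o] by simp
  have EGF: "E * G - F^2 = (norm cr3)^2"
  proof -
    have "(norm cr3)^2 + F^2 = (norm Y1 * norm Y2)^2" unfolding cr3_def F_def by (rule norm_cross_dot)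
    also have "(norm Y1 * norm Y2)^2 = E * G" by (simp add: E_def G_def power_mult_distrib dot_square_norm)
    finally show ?thesis by simp
  qed
  have EGFpos: "E * G - F^2 > 0" using cr by (simp add: EGF cr3_def)
  have Kval: "gauss_curv_chart Y w0 = (l * nn - m^2) / (E * G - F^2)"
  proof -
    have p2: "pd2 Y 1 1 w0 = Y11" "pd2 Y 1 2 w0 = Y12" "pd2 Y 2 2 w0 = Y22"
      by (simp_all add: pd2D Y11_def Y12_def Y22_def e1_def e2_def)
    have "gauss_curv_chart Y w0 = ((Y11 \<bullet> N') * (Y22 \<bullet> N') - (Y12 \<bullet> N')^2) / (E * G - F^2)"
      unfolding gauss_curv_chart_def Let_def p2 pdY by (simp add: N'_def cr3_def E_def F_def G_def)
    also have "(Y11 \<bullet> N') * (Y22 \<bullet> N') - (Y12 \<bullet> N')^2 = l * nn - m^2"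
      using Npm by (auto simp: l_def m_def nn_def inner_commute)
    finally show ?thesis .
  qed
  have "gauss_curv_chart Y w0 * r^2 = (r^2 * (l * nn - m^2)) / (E * G - F^2)" by (simp add: Kval)
  also have "\<dots> \<le> 1"
  proof -
    have "r^2 * (l * nn - m^2) \<le> E * G - F^2" using det by (simp add: power2_eq_square algebra_simps)
    thus ?thesis using EGFpos by simp
  qed
  finally have Kb: "gauss_curv_chart Y w0 * r^2 \<le> 1" .
  show ?thesis using r0 nu_eq Kb by (simp add: u_def r_def Y0_def Y_def)
qed

lemma open_U: "open {(w::'a::topological_space, t::real). 0 < t}"
proof -
  have "{(w::'a, t::real). 0 < t} = UNIV \<times> {0<..}" by auto
  thus ?thesis by (simp add: open_Times)
qed

lemma chart_time:
  fixes F :: "'a::real_normed_vector \<times> real \<Rightarrow> 'b::real_normed_vector"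
  assumes "smooth_on {(w,t). 0 < t} F"
  obtains Gd where "continuous_on {(w,t). 0 < t} Gd"
    and "\<And>w t. 0 < t \<Longrightarrow> ((\<lambda>s. F (w,s)) has_vector_derivative Gd (w,t)) (at t)"
proof -
  obtain D where D0: "\<And>x. x \<in> {(w,t). 0 < t} \<Longrightarrow> D [] x = F x"
    and sm: "\<And>vs x. x \<in> {(w,t). 0 < t} \<Longrightarrow> (D vs has_derivative (\<lambda>h. D (h#vs) x)) (at x)"
    using assms unfolding smooth_on_def by blast
  have c: "continuous_on {(w,t). 0 < t} (D [(0,1)])"
  proof (intro continuous_at_imp_continuous_on ballI)
    fix x :: "'a \<times> real" assume "x \<in> {(w,t). 0 < t}"
    thus "continuous (at x) (D [(0,1)])" using has_derivative_continuous[OF sm[of x "[(0,1)]"]] by simp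
  qed
  have d: "((\<lambda>s. F (w,s)) has_vector_derivative D [(0,1)] (w,t)) (at t)" if t: "0 < t" for w t
  proof -
    have l: "((\<lambda>s. (w, s)) has_derivative (\<lambda>d. (0, d))) (at t)"
      by (auto intro!: derivative_eq_intros)
    have H: "((\<lambda>s. D [] (w, s)) has_derivative (\<lambda>d. D [(0, d)] (w, t))) (at t)"
      using has_derivative_compose[OF l sm[of "(w,t)" "[]"]] t by simp
    have lin: "D [(0, d)] (w, t) = d *\<^sub>R D [(0,1)] (w,t)" for d
    proof -
      have L: "linear (\<lambda>h. D [h] (w,t))" using has_derivative_linear[OF sm[of "(w,t)" "[]"]] t by simp
      have "D [d *\<^sub>R (0::'a, 1)] (w,t) = d *\<^sub>R D [(0,1)] (w,t)" by (rule linear_scale[OF L])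
      thus ?thesis by simp
    qed
    have eqf: "(\<lambda>d. D [(0, d)] (w, t)) = (\<lambda>d. d *\<^sub>R D [(0,1)] (w,t))" using lin by (rule ext)
    have "((\<lambda>s. D [] (w, s)) has_derivative (\<lambda>d. d *\<^sub>R D [(0,1)] (w,t))) (at t)" using H unfolding eqf .
    hence "((\<lambda>s. F (w, s)) has_derivative (\<lambda>d. d *\<^sub>R D [(0,1)] (w,t))) (at t)"
    proof (rule has_derivative_transform_within_open[where s="{0<..}"])
      show "open {0::real<..}" by simp
      show "t \<in> {0<..}" using t by simp
      fix x :: real assume "x \<in> {0<..}"
      thus "D [] (w, x) = F (w, x)" using D0[of "(w,x)"] by simp
    qed
    thus ?thesis by (simp add: has_vector_derivative_def)
  qed
  show ?thesis using that c d by blast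
qed

lemma unif_diff:
  fixes F :: "(real^2) \<times> real \<Rightarrow> real^3"
  assumes cG: "continuous_on {(w,t). 0 < t} Gd"
    and dG: "\<And>w t. 0 < t \<Longrightarrow> ((\<lambda>s. F (w,s)) has_vector_derivative Gd (w,t)) (at t)"
    and t: "t > 0" and e: "e > 0"
  shows "\<exists>\<delta>>0. \<forall>w s. norm w \<le> 1 \<and> 0 < s \<and> s < \<delta> \<longrightarrow> norm (F (w, t+s) - F (w, t) - s *\<^sub>R Gd (w,t)) \<le> e * s"
proof -
  define K where "K = cball (0::real^2) 1 \<times> {t..t+1}"
  have cK: "compact K" unfolding K_def by (intro compact_Times) auto
  have KU: "K \<subseteq> {(w,t). 0 < t}" using t by (auto simp: K_def)
  have "uniformly_continuous_on K Gd"
    using compact_uniformly_continuous[OF continuous_on_subset[OF cG KU] cK] .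
  hence "\<forall>e>0. \<exists>d>0. \<forall>x\<in>K. \<forall>x'\<in>K. dist x' x < d \<longrightarrow> dist (Gd x') (Gd x) < e"
    by (simp only: uniformly_continuous_on_def)
  then obtain d0 where d0: "d0 > 0" "\<And>x x'. x \<in> K \<Longrightarrow> x' \<in> K \<Longrightarrow> dist x' x < d0 \<Longrightarrow> dist (Gd x') (Gd x) < e"
    using e by blast
  define \<delta> where "\<delta> = min d0 1"
  have "\<delta> > 0" using d0 by (simp add: \<delta>_def)
  moreover have "norm (F (w, t+s) - F (w, t) - s *\<^sub>R Gd (w,t)) \<le> e * s"
    if w: "norm w \<le> 1" and s: "0 < s" "s < \<delta>" for w s
  proof -
    define h where "h \<tau> = F (w, \<tau>) - \<tau> *\<^sub>R Gd (w,t)" for \<tau>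
    have dh: "(h has_derivative (\<lambda>d. d *\<^sub>R (Gd (w,\<tau>) - Gd (w,t)))) (at \<tau>)" if "0 < \<tau>" for \<tau>
    proof -
      have "(h has_vector_derivative (Gd (w,\<tau>) - Gd (w,t))) (at \<tau>)"
      proof -
        have "((\<lambda>\<tau>. \<tau> *\<^sub>R Gd (w,t)) has_vector_derivative Gd (w,t)) (at \<tau>)"
          unfolding has_vector_derivative_def
          by (rule bounded_linear_imp_has_derivative[OF bounded_linear_scaleR_left])
        thus ?thesis unfolding h_def by (rule has_vector_derivative_diff[OF dG[OF that, of w]])
      qed
      thus ?thesis by (simp add: has_vector_derivative_def scaleR_diff_right)
    qed
    have ch: "continuous_on {t..t+s} h"
    proof (intro continuous_at_imp_continuous_on ballI)
      fix x assume "x \<in> {t..t+s}"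
      hence "0 < x" using t by auto
      thus "continuous (at x) h" using has_derivative_continuous[OF dh[of x]] by simp
    qed
    obtain \<xi> where \<xi>: "\<xi> \<in> {t<..<t+s}" "norm (h (t+s) - h t) \<le> norm ((t + s - t) *\<^sub>R (Gd (w,\<xi>) - Gd (w,t)))"
    proof -
      have "\<exists>x\<in>{t<..<t+s}. norm (h (t+s) - h t) \<le> norm ((\<lambda>\<tau> d. d *\<^sub>R (Gd (w,\<tau>) - Gd (w,t))) x (t + s - t))"
      proof (rule mvt_general[OF _ ch])
        show "t < t + s" using s by simp
        fix x assume "t < x" "x < t + s"
        thus "(h has_derivative (\<lambda>d. d *\<^sub>R (Gd (w,x) - Gd (w,t)))) (at x)" using dh t by simp
      qed
      thus ?thesis using that by blast
    qed
    have "(w, \<xi>) \<in> K" "(w, t) \<in> K" using \<xi>(1) w s by (auto simp: K_def \<delta>_def)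
    moreover have "dist (w, \<xi>) (w, t) < d0" using \<xi>(1) s by (auto simp: dist_Pair_Pair dist_real_def \<delta>_def)
    ultimately have "dist (Gd (w, \<xi>)) (Gd (w, t)) < e" using d0(2) by blast
    hence "norm ((t + s - t) *\<^sub>R (Gd (w,\<xi>) - Gd (w,t))) \<le> s * e" using s by (simp add: dist_norm)
    moreover have "h (t+s) - h t = F (w, t+s) - F (w, t) - s *\<^sub>R Gd (w,t)" by (simp add: h_def algebra_simps)
    ultimately show ?thesis using \<xi>(2) by (simp add: mult.commute)
  qed
  ultimately show ?thesis by blast
qed

lemma right_mono_nonneg:
  fixes g :: "real \<Rightarrow> real"
  assumes ab: "a \<le> b" and cont: "continuous_on {a..b} g" and ga: "g a = 0"
    and loc: "\<And>t. a \<le> t \<Longrightarrow> t < b \<Longrightarrow> \<exists>\<delta>>0. \<forall>s. 0 < s \<and> s < \<delta> \<longrightarrow> g t \<le> g (t+s)"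
  shows "g b \<ge> 0"
proof (rule ccontr)
  assume gb: "\<not> g b \<ge> 0"
  define A where "A = {x\<in>{a..b}. g x < 0}"
  have bA: "b \<in> A" using gb ab by (auto simp: A_def)
  have bdd: "bdd_below A" by (auto simp: A_def bdd_below_def)
  define c where "c = Inf A"
  have cle: "c \<le> x" if "x \<in> A" for x using cInf_lower[OF that bdd] by (simp add: c_def)
  have ac: "a \<le> c" unfolding c_def using bA by (intro cInf_greatest) (auto simp: A_def)
  have cb: "c \<le> b" using cle[OF bA] .
  have gc: "g c \<ge> 0"
  proof (cases "c = a")
    case True thus ?thesis using ga by simp
  next
    case False
    hence ac': "a < c" using ac by simp
    show ?thesis
    proof (rule ccontr)
      assume "\<not> g c \<ge> 0"
      hence neg: "g c < 0" by simp
      obtain d where d: "d > 0" "\<And>y. y \<in> {a..b} \<Longrightarrow> dist y c < d \<Longrightarrow> dist (g y) (g c) < - g c"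
        using cont ac cb neg unfolding continuous_on_iff by (metis atLeastAtMost_iff neg_0_less_iff_less)
      define y where "y = max a (c - d/2)"
      have y: "y \<in> {a..b}" "dist y c < d" "y < c" using ac' d(1) cb by (auto simp: y_def dist_real_def)
      hence "g y < 0" using d(2)[of y] neg by (auto simp: dist_real_def)
      hence "y \<in> A" using y by (auto simp: A_def)
      thus False using cle y(3) by fastforce
    qed
  qed
  hence cA: "c \<notin> A" by (auto simp: A_def)
  have cb': "c < b" using cb cA bA by (cases "c = b") auto
  obtain \<delta> where \<delta>: "\<delta> > 0" "\<And>s. 0 < s \<Longrightarrow> s < \<delta> \<Longrightarrow> g c \<le> g (c+s)" using loc[OF ac cb'] by blast
  have "c + \<delta> \<le> x" if "x \<in> A" for x
  proof (rule ccontr)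
    assume "\<not> c + \<delta> \<le> x"
    moreover have "c \<le> x" using cle that .
    moreover have "x \<noteq> c" using cA that by auto
    ultimately have "0 < x - c" "x - c < \<delta>" by auto
    hence "g c \<le> g x" using \<delta>(2)[of "x - c"] by simp
    thus False using gc that by (auto simp: A_def)
  qed
  hence "c + \<delta> \<le> c" unfolding c_def using bA by (intro cInf_greatest) auto
  thus False using \<delta> by simp
qed

lemma dini_growth:
  fixes f :: "real \<Rightarrow> real"
  assumes ab: "a \<le> b" and cont: "continuous_on {a..b} f"
    and loc: "\<And>t e. a \<le> t \<Longrightarrow> t < b \<Longrightarrow> e > 0 \<Longrightarrow> \<exists>\<delta>>0. \<forall>s. 0 < s \<and> s < \<delta> \<longrightarrow> f (t+s) \<ge> f t + s * (L - e)"
  shows "f b \<ge> f a + L * (b - a)"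
proof -
  have eps: "f b \<ge> f a + (L - e) * (b - a)" if e: "e > 0" for e
  proof -
    define g where "g x = f x - f a - (L - e) * (x - a)" for x
    have "g b \<ge> 0"
    proof (rule right_mono_nonneg[OF ab])
      show "continuous_on {a..b} g" unfolding g_def by (intro continuous_intros cont)
      show "g a = 0" by (simp add: g_def)
      fix t assume t: "a \<le> t" "t < b"
      obtain \<delta> where \<delta>: "\<delta> > 0" "\<And>s. 0 < s \<and> s < \<delta> \<Longrightarrow> f (t+s) \<ge> f t + s * (L - e)"
        using loc[OF t e] by blast
      have "g t \<le> g (t+s)" if "0 < s" "s < \<delta>" for s
        using \<delta>(2)[of s] that by (simp add: g_def algebra_simps)
      thus "\<exists>\<delta>>0. \<forall>s. 0 < s \<and> s < \<delta> \<longrightarrow> g t \<le> g (t+s)" using \<delta>(1) by blast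
    qed
    thus ?thesis by (simp add: g_def algebra_simps)
  qed
  show ?thesis
  proof (cases "a = b")
    case True thus ?thesis by simp
  next
    case False
    hence ba: "b - a > 0" using ab by simp
    show ?thesis
    proof (rule ccontr)
      assume "\<not> ?thesis"
      hence q: "f a + L * (b - a) - f b > 0" by simp
      define e where "e = (f a + L * (b - a) - f b) / (2 * (b - a))"
      have e0: "e > 0" using q ba by (simp add: e_def)
      have "e * (b - a) = (f a + L * (b - a) - f b) / 2"
        using ba unfolding e_def by (simp add: field_simps)
      thus False using eps[OF e0] q by (simp add: algebra_simps)
    qed
  qed
qed

definition rad :: "(real^3 \<Rightarrow> real \<Rightarrow> real^3) \<Rightarrow> real^3 \<Rightarrow> real \<Rightarrow> real" where
  "rad X c t = Inf ((\<lambda>p. norm (X p t - c)) ` S2)"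

lemma S2ne: "(axis 1 1 :: real^3) \<in> S2" by simp

context
  fixes X :: "real^3 \<Rightarrow> real \<Rightarrow> real^3"
  assumes cont: "continuous_on (S2 \<times> {t. 0 \<le> t}) (\<lambda>(p,t). X p t)"
begin

lemma contX: "0 \<le> t \<Longrightarrow> continuous_on S2 (\<lambda>p. X p t)"
proof -
  assume t: "0 \<le> t"
  have "continuous_on S2 ((\<lambda>(p,t). X p t) \<circ> (\<lambda>p. (p, t)))"
    by (rule continuous_on_compose) (auto intro!: continuous_intros intro: continuous_on_subset[OF cont] simp: t)
  thus ?thesis by (simp add: o_def)
qed

lemma rad_props:
  assumes t: "0 \<le> t"
  shows "\<exists>p\<in>S2. rad X c t = norm (X p t - c)" and "\<And>p. p \<in> S2 \<Longrightarrow> rad X c t \<le> norm (X p t - c)"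
    and "rad X c t \<ge> 0"
proof -
  have cf: "continuous_on S2 (\<lambda>p. norm (X p t - c))" by (intro continuous_intros contX t)
  obtain p0 where p0: "p0 \<in> S2" "\<And>y. y \<in> S2 \<Longrightarrow> norm (X p0 t - c) \<le> norm (X y t - c)"
    using continuous_attains_inf[OF compact_sphere _ cf] S2ne by blast
  have eq: "rad X c t = norm (X p0 t - c)" unfolding rad_def
    by (rule cInf_eq_minimum) (use p0 in auto)
  show "\<exists>p\<in>S2. rad X c t = norm (X p t - c)" using eq p0 by blast
  show "\<And>p. p \<in> S2 \<Longrightarrow> rad X c t \<le> norm (X p t - c)" using eq p0 by simp
  show "rad X c t \<ge> 0" using eq by simp
qed

lemma rad_ge:
  assumes "\<And>p. p \<in> S2 \<Longrightarrow> B \<le> norm (X p t - c)"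
  shows "B \<le> rad X c t"
  unfolding rad_def using assms by (intro cInf_greatest) (use S2ne in auto)

lemma unif_cont:
  assumes "T0 \<ge> 0" "\<eta> > 0"
  shows "\<exists>\<delta>>0. \<forall>p\<in>S2. \<forall>t1 t2. 0 \<le> t1 \<and> t1 \<le> T0 \<and> 0 \<le> t2 \<and> t2 \<le> T0 \<and> \<bar>t1 - t2\<bar> < \<delta> \<longrightarrow> norm (X p t1 - X p t2) < \<eta>"
proof -
  define K where "K = S2 \<times> {0..T0}"
  have cK: "compact K" unfolding K_def by (intro compact_Times compact_sphere) auto
  have "continuous_on K (\<lambda>(p,t). X p t)" using cont by (rule continuous_on_subset) (auto simp: K_def)
  hence "uniformly_continuous_on K (\<lambda>(p,t). X p t)" using compact_uniformly_continuous cK by blast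
  hence "\<forall>e>0. \<exists>d>0. \<forall>x\<in>K. \<forall>x'\<in>K. dist x' x < d \<longrightarrow> dist ((\<lambda>(p,t). X p t) x') ((\<lambda>(p,t). X p t) x) < e"
    by (simp only: uniformly_continuous_on_def)
  then obtain d where d: "d > 0" "\<And>x x'. x \<in> K \<Longrightarrow> x' \<in> K \<Longrightarrow> dist x' x < d \<Longrightarrow> dist ((\<lambda>(p,t). X p t) x') ((\<lambda>(p,t). X p t) x) < \<eta>"
    using assms(2) by blast
  have "norm (X p t1 - X p t2) < \<eta>" if "p \<in> S2" "0 \<le> t1" "t1 \<le> T0" "0 \<le> t2" "t2 \<le> T0" "\<bar>t1 - t2\<bar> < d" for p t1 t2
  proof -
    have "(p, t1) \<in> K" "(p, t2) \<in> K" using that by (auto simp: K_def)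
    moreover have "dist (p, t1) (p, t2) < d" using that by (simp add: dist_Pair_Pair dist_real_def)
    ultimately show ?thesis using d(2) by (force simp: dist_norm)
  qed
  thus ?thesis using d(1) by blast
qed

end

lemma ptwise_good:
  fixes a b G :: "real^3"
  assumes r0: "r > 0" and ar: "norm a \<ge> r" and s: "s > 0" and e: "e > 0"
    and phi: "(1 / norm a) * (a \<bullet> G) > r^2 - e/2" and bG: "norm (b - s *\<^sub>R G) \<le> (e/4) * s"
  shows "norm (a + b) \<ge> r + s * (r^2 - e)"
proof -
  have a0: "norm a > 0" using r0 ar by linarith
  define u where "u = (1 / norm a) *\<^sub>R a"
  have nu: "norm u = 1" using a0 by (simp add: u_def)
  have "u \<bullet> (a + b) \<le> norm (a + b)" using norm_cauchy_schwarz[of u "a + b"] nu by simp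
  moreover have "u \<bullet> a = norm a" using a0 by (simp add: u_def dot_square_norm power2_eq_square)
  moreover have "u \<bullet> b = s * ((1 / norm a) * (a \<bullet> G)) + u \<bullet> (b - s *\<^sub>R G)"
    by (simp add: u_def inner_diff_right algebra_simps)
  moreover have "u \<bullet> (b - s *\<^sub>R G) \<ge> - ((e/4) * s)"
  proof -
    have "- (u \<bullet> (b - s *\<^sub>R G)) \<le> norm (b - s *\<^sub>R G)"
      using norm_cauchy_schwarz[of "-u" "b - s *\<^sub>R G"] nu by simp
    thus ?thesis using bG by linarith
  qed
  moreover have "s * ((1 / norm a) * (a \<bullet> G)) \<ge> s * (r^2 - e/2)"
    using phi s by (intro mult_left_mono) auto
  ultimately have "norm (a + b) \<ge> r + s * (r^2 - e/2) - (e/4) * s" using ar by (simp add: inner_add_right)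
  moreover have "s * (r^2 - e/2) - (e/4) * s \<ge> s * (r^2 - e)" using s e by (simp add: algebra_simps)
  ultimately show ?thesis by linarith
qed

lemma ptwise_bad:
  fixes a b :: "real^3"
  assumes ar: "norm a \<ge> r + \<eta>" and b: "norm b < \<eta>/2" and sr: "s * r^2 \<le> \<eta>/2" and e: "e > 0" and s: "s > 0"
  shows "norm (a + b) \<ge> r + s * (r^2 - e)"
proof -
  have "norm (a + b) \<ge> norm a - norm b" using norm_triangle_ineq4[of "a + b" b] by simp
  moreover have "s * (r^2 - e) \<le> s * r^2" using s e by simp
  ultimately show ?thesis using ar b sr by linarith
qed

locale icf_inf =
  fixes X :: "real^3 \<Rightarrow> real \<Rightarrow> real^3"
  assumes csc: "\<And>t. 0 \<le> t \<Longrightarrow> closed_strictly_convex (\<lambda>p. X p t)"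
    and cont: "continuous_on (S2 \<times> {t. 0 \<le> t}) (\<lambda>(p,t). X p t)"
    and smt: "\<And>\<sigma>. \<sigma> \<in> charts \<Longrightarrow> smooth_on {(w,t). 0 < t} (\<lambda>(w,t). X (\<sigma> w) t)"
    and vel: "\<And>\<sigma> w t. \<sigma> \<in> charts \<Longrightarrow> 0 < t \<Longrightarrow> \<exists>n. is_outer_normal (\<lambda>p. X p t) \<sigma> w n \<and>
        ((\<lambda>s. X (\<sigma> w) s) has_vector_derivative (1 / gauss_curv_chart (\<lambda>w'. X (\<sigma> w') t) w) *\<^sub>R n) (at t)"
begin

lemma chart_G:
  assumes "\<sigma> \<in> charts"
  obtains Gd where "continuous_on {(w,t). 0 < t} Gd"
    and "\<And>w t. 0 < t \<Longrightarrow> ((\<lambda>s. X (\<sigma> w) s) has_vector_derivative Gd (w,t)) (at t)"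
proof -
  obtain Gd where "continuous_on {(w,t). 0 < t} Gd"
    and "\<And>w t. 0 < t \<Longrightarrow> ((\<lambda>s. (\<lambda>(w,t). X (\<sigma> w) t) (w,s)) has_vector_derivative Gd (w,t)) (at t)"
    using chart_time[OF smt[OF assms]] by blast
  thus ?thesis using that by simp
qed

lemma cont_chart: "0 \<le> t \<Longrightarrow> \<sigma> \<in> charts \<Longrightarrow> continuous_on UNIV (\<lambda>w. X (\<sigma> w) t)"
proof -
  assume t: "0 \<le> t" and \<sigma>: "\<sigma> \<in> charts"
  have "smooth_on UNIV ((\<lambda>p. X p t) \<circ> \<sigma>)" using csc[OF t] \<sigma> unfolding closed_strictly_convex_def by blast
  then obtain D where D0: "\<And>x. D [] x = ((\<lambda>p. X p t) \<circ> \<sigma>) x"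
    and sm: "\<And>vs x. (D vs has_derivative (\<lambda>h. D (h#vs) x)) (at x)"
    unfolding smooth_on_def by auto
  have "continuous_on UNIV (D [])"
    by (intro continuous_at_imp_continuous_on ballI has_derivative_continuous[OF sm])
  moreover have "D [] = (\<lambda>w. X (\<sigma> w) t)" using D0 by auto
  ultimately show ?thesis by simp
qed

end

context icf_inf begin

lemma bad_set:
  assumes \<sigma>: "\<sigma> \<in> charts" and t: "0 < t" and cin: "c \<in> inside ((\<lambda>p. X p t) ` S2)" and e: "e > 0"
    and cG: "continuous_on {(w,t). 0 < t} Gd"
    and dG: "\<And>w t. 0 < t \<Longrightarrow> ((\<lambda>s. X (\<sigma> w) s) has_vector_derivative Gd (w,t)) (at t)"
  shows "\<exists>\<eta>>0. \<forall>w. norm w \<le> 1 \<and> (1 / norm (X (\<sigma> w) t - c)) * ((X (\<sigma> w) t - c) \<bullet> Gd (w,t)) \<le> (rad X c t)^2 - e/2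
           \<longrightarrow> norm (X (\<sigma> w) t - c) \<ge> rad X c t + \<eta>"
proof -
  define r where "r = rad X c t"
  have rle: "\<And>p. p \<in> S2 \<Longrightarrow> r \<le> norm (X p t - c)" using rad_props(2)[OF cont] t by (simp add: r_def)
  obtain p0 where p0: "p0 \<in> S2" "r = norm (X p0 t - c)" using rad_props(1)[OF cont, of t c] t by (auto simp: r_def)
  have cnM: "c \<notin> (\<lambda>p. X p t) ` S2" using cin inside_no_overlap by blast
  have r0: "r > 0" using p0 cnM by auto
  define Y where "Y w = X (\<sigma> w) t" for w
  define \<phi> where "\<phi> w = (1 / norm (Y w - c)) * ((Y w - c) \<bullet> Gd (w,t))" for w
  have cY: "continuous_on UNIV Y" using cont_chart[of t \<sigma>] t \<sigma> by (simp add: Y_def)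
  have cGt: "continuous_on UNIV (\<lambda>w. Gd (w,t))"
    by (rule continuous_on_compose2[OF cG]) (use t in \<open>auto intro!: continuous_intros\<close>)
  have Yr: "r \<le> norm (Y w - c)" for w using rle charts_S2[OF \<sigma>] by (simp add: Y_def)
  have nz: "norm (Y w - c) \<noteq> 0" for w using Yr[of w] r0 by linarith
  have c\<phi>: "continuous_on UNIV \<phi>"
    unfolding \<phi>_def by (intro continuous_intros cY cGt) (use nz in auto)
  define B where "B = cball 0 1 \<inter> \<phi> -` {..r^2 - e/2}"
  have "closed B" unfolding B_def
    by (rule continuous_closed_preimage) (auto intro: continuous_on_subset[OF c\<phi>])
  moreover have "bounded B" unfolding B_def by (rule bounded_subset[of "cball 0 1"]) auto
  ultimately have cB: "compact B" by (simp add: compact_eq_bounded_closed)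
  show ?thesis
  proof (cases "B = {}")
    case True
    show ?thesis
      by (rule exI[of _ 1]) (use True in \<open>auto simp: B_def \<phi>_def Y_def r_def\<close>)
  next
    case False
    have cN: "continuous_on B (\<lambda>w. norm (Y w - c))"
      by (intro continuous_intros continuous_on_subset[OF cY]) auto
    obtain w1 where w1: "w1 \<in> B" "\<And>w. w \<in> B \<Longrightarrow> norm (Y w1 - c) \<le> norm (Y w - c)"
      using continuous_attains_inf[OF cB False cN] by blast
    have gt: "norm (Y w1 - c) > r"
    proof (rule ccontr)
      assume "\<not> norm (Y w1 - c) > r"
      hence eq: "norm (Y w1 - c) = r" using Yr[of w1] by simp
      have mn: "\<And>p. p \<in> S2 \<Longrightarrow> norm (X (\<sigma> w1) t - c) \<le> norm (X p t - c)"
        using eq rle by (simp add: Y_def)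
      obtain n where on: "is_outer_normal (\<lambda>p. X p t) \<sigma> w1 n"
        and vd: "((\<lambda>s. X (\<sigma> w1) s) has_vector_derivative (1 / gauss_curv_chart (\<lambda>w'. X (\<sigma> w') t) w1) *\<^sub>R n) (at t)"
        using vel[OF \<sigma> t] by blast
      have gm: "norm (X (\<sigma> w1) t - c) > 0 \<and> n = (1 / norm (X (\<sigma> w1) t - c)) *\<^sub>R (X (\<sigma> w1) t - c) \<and>
         gauss_curv_chart ((\<lambda>p. X p t) \<circ> \<sigma>) w1 * (norm (X (\<sigma> w1) t - c))^2 \<le> 1"
        by (rule geom_min[OF csc[of t] \<sigma> cin mn on]) (use t in simp)
      define K where "K = gauss_curv_chart (\<lambda>w'. X (\<sigma> w') t) w1"
      have Keq: "gauss_curv_chart ((\<lambda>p. X p t) \<circ> \<sigma>) w1 = K" by (simp add: K_def o_def)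
      have Kpos: "K > 0" using csc[of t] t \<sigma> unfolding closed_strictly_convex_def Keq[symmetric] by auto
      have Gd1: "Gd (w1, t) = (1 / K) *\<^sub>R n"
        using vector_derivative_unique_at[OF dG[OF t] vd] by (simp add: K_def)
      have nn: "n = (1 / r) *\<^sub>R (Y w1 - c)" using gm eq by (simp add: Y_def)
      have "\<phi> w1 = (1 / r) * ((Y w1 - c) \<bullet> ((1 / K) *\<^sub>R ((1 / r) *\<^sub>R (Y w1 - c))))"
        by (simp add: \<phi>_def eq Gd1 nn)
      also have "\<dots> = (1 / K) * ((1 / r) * (1 / r)) * ((Y w1 - c) \<bullet> (Y w1 - c))" by (simp add: algebra_simps)
      also have "(Y w1 - c) \<bullet> (Y w1 - c) = r * r" using eq by (simp add: dot_square_norm power2_eq_square)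
      also have "(1 / K) * ((1 / r) * (1 / r)) * (r * r) = 1 / K" using r0 by simp
      finally have phi1: "\<phi> w1 = 1 / K" .
      have "K * r^2 \<le> 1" using gm eq Keq by (simp add: Y_def)
      hence "r^2 \<le> 1 / K" using Kpos by (simp add: field_simps)
      hence "\<phi> w1 \<ge> r^2" using phi1 by simp
      moreover have "\<phi> w1 \<le> r^2 - e/2" using w1(1) by (simp add: B_def)
      ultimately show False using e by simp
    qed
    show ?thesis
    proof (rule exI[of _ "norm (Y w1 - c) - r"], intro conjI allI impI)
      show "norm (Y w1 - c) - r > 0" using gt by simp
      fix w assume "norm w \<le> 1 \<and> (1 / norm (X (\<sigma> w) t - c)) * ((X (\<sigma> w) t - c) \<bullet> Gd (w,t)) \<le> (rad X c t)^2 - e/2"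
      hence "w \<in> B" by (simp add: B_def \<phi>_def Y_def r_def)
      thus "norm (X (\<sigma> w) t - c) \<ge> rad X c t + (norm (Y w1 - c) - r)"
        using w1(2) by (simp add: Y_def r_def)
    qed
  qed
qed

end

context icf_inf begin

lemma dini_rad:
  assumes t: "0 < t" and cin: "c \<in> inside ((\<lambda>p. X p t) ` S2)" and e: "e > 0"
  shows "\<exists>\<delta>>0. \<forall>s. 0 < s \<and> s < \<delta> \<longrightarrow> rad X c (t+s) \<ge> rad X c t + s * ((rad X c t)^2 - e)"
proof -
  define r where "r = rad X c t"
  have rle: "\<And>p. p \<in> S2 \<Longrightarrow> r \<le> norm (X p t - c)" using rad_props(2)[OF cont] t by (simp add: r_def)
  obtain p0 where p0: "p0 \<in> S2" "r = norm (X p0 t - c)" using rad_props(1)[OF cont, of t c] t by (auto simp: r_def)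
  have cnM: "c \<notin> (\<lambda>p. X p t) ` S2" using cin inside_no_overlap by blast
  have r0: "r > 0" using p0 cnM by auto
  have e4: "e/4 > 0" using e by simp
  have per_chart: "\<exists>Gd \<eta> \<delta>. \<eta> > 0 \<and> \<delta> > 0 \<and>
      (\<forall>w. norm w \<le> 1 \<and> (1 / norm (X (\<sigma> w) t - c)) * ((X (\<sigma> w) t - c) \<bullet> Gd (w,t)) \<le> r^2 - e/2
           \<longrightarrow> norm (X (\<sigma> w) t - c) \<ge> r + \<eta>) \<and>
      (\<forall>w s. norm w \<le> 1 \<and> 0 < s \<and> s < \<delta> \<longrightarrow> norm (X (\<sigma> w) (t+s) - X (\<sigma> w) t - s *\<^sub>R Gd (w,t)) \<le> (e/4) * s)"
    if \<sigma>: "\<sigma> \<in> charts" for \<sigma>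
  proof -
    obtain Gd where cG: "continuous_on {(w,t). 0 < t} Gd"
      and dG: "\<And>w t. 0 < t \<Longrightarrow> ((\<lambda>s. X (\<sigma> w) s) has_vector_derivative Gd (w,t)) (at t)"
      using chart_G[OF \<sigma>] by blast
    obtain \<eta> where \<eta>: "\<eta> > 0" "\<forall>w. norm w \<le> 1 \<and> (1 / norm (X (\<sigma> w) t - c)) * ((X (\<sigma> w) t - c) \<bullet> Gd (w,t)) \<le> r^2 - e/2
           \<longrightarrow> norm (X (\<sigma> w) t - c) \<ge> r + \<eta>"
      using bad_set[OF \<sigma> t cin e cG dG] by (auto simp: r_def)
    have dG': "\<And>w t. 0 < t \<Longrightarrow> ((\<lambda>s. (\<lambda>(w,s). X (\<sigma> w) s) (w,s)) has_vector_derivative Gd (w,t)) (at t)"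
      using dG by simp
    obtain \<delta> where \<delta>: "\<delta> > 0" "\<forall>w s. norm w \<le> 1 \<and> 0 < s \<and> s < \<delta> \<longrightarrow>
        norm ((\<lambda>(w,s). X (\<sigma> w) s) (w, t+s) - (\<lambda>(w,s). X (\<sigma> w) s) (w, t) - s *\<^sub>R Gd (w,t)) \<le> (e/4) * s"
      using unif_diff[OF cG dG' t e4] by blast
    show ?thesis using \<eta> \<delta> by auto
  qed
  obtain GN \<eta>N \<delta>N where N: "\<eta>N > 0" "\<delta>N > 0"
      "\<forall>w. norm w \<le> 1 \<and> (1 / norm (X (chartN w) t - c)) * ((X (chartN w) t - c) \<bullet> GN (w,t)) \<le> r^2 - e/2
           \<longrightarrow> norm (X (chartN w) t - c) \<ge> r + \<eta>N"
      "\<forall>w s. norm w \<le> 1 \<and> 0 < s \<and> s < \<delta>N \<longrightarrow> norm (X (chartN w) (t+s) - X (chartN w) t - s *\<^sub>R GN (w,t)) \<le> (e/4) * s"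
    using per_chart[of chartN] by (auto simp: charts_def)
  obtain GS \<eta>S \<delta>S where S: "\<eta>S > 0" "\<delta>S > 0"
      "\<forall>w. norm w \<le> 1 \<and> (1 / norm (X (chartS w) t - c)) * ((X (chartS w) t - c) \<bullet> GS (w,t)) \<le> r^2 - e/2
           \<longrightarrow> norm (X (chartS w) t - c) \<ge> r + \<eta>S"
      "\<forall>w s. norm w \<le> 1 \<and> 0 < s \<and> s < \<delta>S \<longrightarrow> norm (X (chartS w) (t+s) - X (chartS w) t - s *\<^sub>R GS (w,t)) \<le> (e/4) * s"
    using per_chart[of chartS] by (auto simp: charts_def)
  define \<eta> where "\<eta> = min \<eta>N \<eta>S"
  have \<eta>0: "\<eta> > 0" using N S by (simp add: \<eta>_def)
  obtain \<delta>2 where \<delta>2: "\<delta>2 > 0" "\<forall>p\<in>S2. \<forall>t1 t2. 0 \<le> t1 \<and> t1 \<le> t+1 \<and> 0 \<le> t2 \<and> t2 \<le> t+1 \<and> \<bar>t1 - t2\<bar> < \<delta>2 \<longrightarrow> norm (X p t1 - X p t2) < \<eta>/2"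
    using unif_cont[OF cont, of "t+1" "\<eta>/2"] t \<eta>0 by auto
  define \<delta> where "\<delta> = min (min \<delta>N \<delta>S) (min \<delta>2 (min 1 (\<eta> / (2 * (r^2 + 1)))))"
  have d2: "0 < 2 * (r^2 + 1)" by (smt (verit) zero_le_power2)
  have q: "\<eta> / (2 * (r^2 + 1)) > 0" using \<eta>0 d2 by (rule divide_pos_pos)
  have \<delta>0: "\<delta> > 0" using N S \<delta>2 q unfolding \<delta>_def by linarith
  have main: "rad X c (t+s) \<ge> r + s * (r^2 - e)" if s: "0 < s" "s < \<delta>" for s
  proof (rule rad_ge[OF cont])
    fix p assume p: "p \<in> S2"
    have small_b: "norm (X p (t+s) - X p t) < \<eta>/2"
      using \<delta>2(2) p s t by (auto simp: \<delta>_def)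
    have sr: "s * r^2 \<le> \<eta>/2"
    proof -
      have "s < \<eta> / (2 * (r^2 + 1))" using s by (simp add: \<delta>_def)
      hence "s * (2 * (r^2 + 1)) < \<eta>" using d2 by (simp add: pos_less_divide_eq)
      moreover have "s * r^2 \<le> s * (r^2 + 1)" using s by simp
      ultimately show ?thesis by (simp add: algebra_simps)
    qed
    have gen: "r + s * (r^2 - e) \<le> norm (X (\<sigma> w) (t+s) - c)"
      if "\<sigma> w = p" "norm w \<le> 1" "\<eta> \<le> \<eta>'" "\<delta> \<le> \<delta>'"
        "\<forall>w. norm w \<le> 1 \<and> (1 / norm (X (\<sigma> w) t - c)) * ((X (\<sigma> w) t - c) \<bullet> G (w,t)) \<le> r^2 - e/2
           \<longrightarrow> norm (X (\<sigma> w) t - c) \<ge> r + \<eta>'"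
        "\<forall>w s. norm w \<le> 1 \<and> 0 < s \<and> s < \<delta>' \<longrightarrow> norm (X (\<sigma> w) (t+s) - X (\<sigma> w) t - s *\<^sub>R G (w,t)) \<le> (e/4) * s"
      for \<sigma> w \<eta>' \<delta>' G
    proof -
      define a where "a = X (\<sigma> w) t - c"
      define b where "b = X (\<sigma> w) (t+s) - X (\<sigma> w) t"
      have ab: "a + b = X (\<sigma> w) (t+s) - c" by (simp add: a_def b_def)
      show ?thesis
      proof (cases "(1 / norm a) * (a \<bullet> G (w,t)) \<le> r^2 - e/2")
        case True
        hence "norm a \<ge> r + \<eta>'" using that(2,5) by (auto simp: a_def)
        hence "norm a \<ge> r + \<eta>" using that(3) by simp
        moreover have "norm b < \<eta>/2" using small_b that(1) by (simp add: b_def)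
        ultimately show ?thesis using ptwise_bad[of r \<eta> a b s e] sr e s by (simp add: ab)
      next
        case False
        have "norm a \<ge> r" using rle p that(1) by (simp add: a_def)
        moreover have "norm (b - s *\<^sub>R G (w,t)) \<le> (e/4) * s"
          using that(2,4,6) s by (auto simp: b_def)
        ultimately show ?thesis using ptwise_good[of r a s e "G (w,t)" b] r0 s e False by (simp add: ab not_le)
      qed
    qed
    obtain \<sigma> w where \<sigma>w: "\<sigma> \<in> charts" "norm w \<le> 1" "\<sigma> w = p" using charts_cover[OF p] by blast
    show "r + s * (r^2 - e) \<le> norm (X p (t+s) - c)"
    proof (cases "\<sigma> = chartN")
      case True
      show ?thesis using gen[of chartN w \<eta>N \<delta>N GN] \<sigma>w True N by (simp add: \<eta>_def \<delta>_def)
    next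
      case False
      hence "\<sigma> = chartS" using \<sigma>w(1) by (simp add: charts_def)
      thus ?thesis using gen[of chartS w \<eta>S \<delta>S GS] \<sigma>w S by (simp add: \<eta>_def \<delta>_def)
    qed
  qed
  show ?thesis using \<delta>0 main by (auto simp: r_def)
qed

end

lemma nonplanar:
  fixes \<Phi> :: "real^3 \<Rightarrow> real^3"
  assumes csc: "closed_strictly_convex \<Phi>" and a0: "a \<noteq> 0" and pl: "\<Phi> ` S2 \<subseteq> {x. a \<bullet> x = b}"
  shows False
proof -
  define Y where "Y = \<Phi> \<circ> chartN"
  have sY: "smooth_on UNIV Y" and crossnz: "\<And>w. cross3 (pd Y 1 w) (pd Y 2 w) \<noteq> 0"
    and Kpos: "\<And>w. gauss_curv_chart Y w > 0"
    using csc unfolding closed_strictly_convex_def Y_def charts_def by auto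
  obtain D where D0: "\<And>x. D [] x = Y x" and sm: "\<And>vs x. (D vs has_derivative (\<lambda>h. D (h#vs) x)) (at x)"
    using sY unfolding smooth_on_def by auto
  have YD: "Y = D []" using D0 by auto
  have pdfun: "pd Y i = D [axis i 1]" for i
  proof
    fix w
    have "frechet_derivative (D []) (at w) = (\<lambda>h. D [h] w)"
      using frechet_derivative_at[OF sm[of "[]" w]] by simp
    thus "pd Y i w = D [axis i 1] w" by (simp add: pd_def YD)
  qed
  have pd2D: "pd2 Y i j w = D [axis j 1, axis i 1] w" for i j w
  proof -
    have "frechet_derivative (D [axis i 1]) (at w) = (\<lambda>h. D [h, axis i 1] w)"
      using frechet_derivative_at[OF sm[of "[axis i 1]" w]] by simp
    thus ?thesis by (simp add: pd2_def pdfun)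
  qed
  have c0: "a \<bullet> D [] w = b" for w
  proof -
    have "\<Phi> (chartN w) \<in> \<Phi> ` S2" using chartN_S2[of w] by blast
    thus ?thesis using pl D0[of w] by (auto simp: Y_def)
  qed
  have c1: "a \<bullet> D [h] w = 0" for h w
  proof -
    have "((\<lambda>\<tau>. a \<bullet> D [] (w + \<tau> *\<^sub>R h)) has_real_derivative a \<bullet> D [h] (w + 0 *\<^sub>R h)) (at 0)"
      by (rule sm_line_inner[OF sm])
    moreover have "((\<lambda>\<tau>. a \<bullet> D [] (w + \<tau> *\<^sub>R h)) has_real_derivative 0) (at 0)"
      using c0 by simp
    ultimately show ?thesis using DERIV_unique by fastforce
  qed
  have c2: "a \<bullet> D [h, k] w = 0" for h k w
  proof -
    have "((\<lambda>\<tau>. a \<bullet> D [k] (w + \<tau> *\<^sub>R h)) has_real_derivative a \<bullet> D [h, k] (w + 0 *\<^sub>R h)) (at 0)"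
      by (rule sm_line_inner[OF sm])
    moreover have "((\<lambda>\<tau>. a \<bullet> D [k] (w + \<tau> *\<^sub>R h)) has_real_derivative 0) (at 0)"
      using c1 by simp
    ultimately show ?thesis using DERIV_unique by fastforce
  qed
  define w :: "real^2" where "w = 0"
  define Y1 Y2 where "Y1 = pd Y 1 w" and "Y2 = pd Y 2 w"
  define cr where "cr = cross3 Y1 Y2"
  define N' where "N' = (1 / norm cr) *\<^sub>R cr"
  define u where "u = (1 / norm a) *\<^sub>R a"
  have cr0: "cr \<noteq> 0" using crossnz by (simp add: cr_def Y1_def Y2_def)
  have N'1: "norm N' = 1" using cr0 by (simp add: N'_def)
  have N'o: "N' \<bullet> Y1 = 0" "N' \<bullet> Y2 = 0" by (simp_all add: N'_def cr_def dot_cross_self)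
  have u1: "norm u = 1" using a0 by (simp add: u_def)
  have uo: "u \<bullet> Y1 = 0" "u \<bullet> Y2 = 0" using c1 by (simp_all add: u_def Y1_def Y2_def pdfun)
  have Npm: "N' = u \<or> N' = - u" using unit_orth_pm[OF cr0[unfolded cr_def] u1 N'1 uo N'o] by simp
  have z: "pd2 Y i j w \<bullet> N' = 0" for i j
    using Npm c2 by (auto simp: pd2D u_def inner_commute)
  have "gauss_curv_chart Y w = ((pd2 Y 1 1 w \<bullet> N') * (pd2 Y 2 2 w \<bullet> N') - (pd2 Y 1 2 w \<bullet> N')^2) /
      (Y1 \<bullet> Y1 * (Y2 \<bullet> Y2) - (Y1 \<bullet> Y2)^2)"
    unfolding gauss_curv_chart_def Let_def by (simp add: N'_def cr_def Y1_def Y2_def)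
  also have "\<dots> = 0" using z[of 1 1] z[of 2 2] z[of 1 2] by simp
  finally have "gauss_curv_chart Y w = 0" .
  thus False using Kpos[of w] by simp
qed

lemma exists_inside:
  fixes \<Phi> :: "real^3 \<Rightarrow> real^3"
  assumes csc: "closed_strictly_convex \<Phi>"
  shows "\<exists>c. c \<in> inside (\<Phi> ` S2)"
proof -
  define M where "M = \<Phi> ` S2"
  have cont: "continuous_on S2 \<Phi>" and conv: "convex (M \<union> inside M)"
    using csc unfolding closed_strictly_convex_def M_def by auto
  have cM: "compact M" unfolding M_def by (rule compact_continuous_image[OF cont compact_sphere])
  have ax: "(axis 1 1 :: real^3) \<in> S2" by simp
  have Mne: "M \<noteq> {}" unfolding M_def using ax by auto
  have intne: "interior (convex hull M) \<noteq> {}"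
  proof
    assume ie: "interior (convex hull M) = {}"
    have "rel_interior (convex hull M) \<noteq> {}"
      using Mne by (simp add: rel_interior_eq_empty convex_convex_hull)
    hence "aff_dim (convex hull M) \<noteq> int DIM(real^3)"
      using ie interior_rel_interior_gen[of "convex hull M"] by auto
    hence "aff_dim M < int DIM(real^3)"
      using aff_dim_le_DIM[of M] by (simp add: aff_dim_convex_hull)
    obtain m0 where m0: "m0 \<in> M" using Mne by blast
    have "aff_dim M = int (dim ((+) (- m0) ` M))"
      by (rule aff_dim_eq_dim) (rule hull_inc[OF m0])
    hence "dim ((+) (- m0) ` M) < DIM(real^3)" using \<open>aff_dim M < _\<close> by simp
    then obtain a :: "real^3" where a: "a \<noteq> 0" "span ((+) (- m0) ` M) \<subseteq> {x. a \<bullet> x = 0}"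
      using lowdim_subset_hyperplane by blast
    have "\<Phi> ` S2 \<subseteq> {x. a \<bullet> x = a \<bullet> m0}"
    proof
      fix y assume "y \<in> \<Phi> ` S2"
      hence "y \<in> M" by (simp add: M_def)
      hence "- m0 + y \<in> span ((+) (- m0) ` M)" by (intro span_base) auto
      hence "a \<bullet> (- m0 + y) = 0" using a(2) by auto
      thus "y \<in> {x. a \<bullet> x = a \<bullet> m0}" by (simp add: inner_add_right inner_diff_right)
    qed
    thus False using nonplanar[OF csc a(1)] by blast
  qed
  have negl: "negligible M"
  proof -
    have dif: "(\<Phi> \<circ> \<sigma>) differentiable_on UNIV" if "\<sigma> \<in> charts" for \<sigma>
    proof -
      have "smooth_on UNIV (\<Phi> \<circ> \<sigma>)" using csc that unfolding closed_strictly_convex_def by blast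
      then obtain D where D0: "\<And>x. D [] x = (\<Phi> \<circ> \<sigma>) x" and sm: "\<And>vs x. (D vs has_derivative (\<lambda>h. D (h#vs) x)) (at x)"
        unfolding smooth_on_def by auto
      have "D [] = \<Phi> \<circ> \<sigma>" using D0 by auto
      moreover have "D [] differentiable_on UNIV"
        unfolding differentiable_on_def differentiable_def using sm by blast
      ultimately show ?thesis by simp
    qed
    have "negligible ((\<Phi> \<circ> \<sigma>) ` UNIV)" if "\<sigma> \<in> charts" for \<sigma>
      by (rule negligible_differentiable_image_lowdim[OF _ dif[OF that]]) simp
    hence "negligible ((\<Phi> \<circ> chartN) ` UNIV \<union> (\<Phi> \<circ> chartS) ` UNIV)"
      by (intro negligible_Un) (auto simp: charts_def)
    moreover have "M \<subseteq> (\<Phi> \<circ> chartN) ` UNIV \<union> (\<Phi> \<circ> chartS) ` UNIV"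
    proof
      fix y assume "y \<in> M"
      then obtain p where p: "p \<in> S2" "y = \<Phi> p" by (auto simp: M_def)
      obtain \<sigma> w where "\<sigma> \<in> charts" "\<sigma> w = p" using charts_cover[OF p(1)] by blast
      thus "y \<in> (\<Phi> \<circ> chartN) ` UNIV \<union> (\<Phi> \<circ> chartS) ` UNIV" using p by (auto simp: charts_def)
    qed
    ultimately show ?thesis by (rule negligible_subset)
  qed
  have "\<not> interior (convex hull M) \<subseteq> M"
  proof
    assume "interior (convex hull M) \<subseteq> M"
    hence "negligible (interior (convex hull M))" using negl negligible_subset by blast
    thus False using open_not_negligible[OF open_interior intne] by simp
  qed
  then obtain c where c: "c \<in> interior (convex hull M)" "c \<notin> M" by blast
  have "c \<in> convex hull M" using c(1) interior_subset by blast
  moreover have "convex hull M \<subseteq> M \<union> inside M" using conv by (intro hull_minimal) auto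
  ultimately have "c \<in> inside M" using c(2) by auto
  thus ?thesis unfolding M_def by blast
qed

context icf_inf begin

lemma M_compact: "0 \<le> t \<Longrightarrow> compact ((\<lambda>p. X p t) ` S2)"
  by (rule compact_continuous_image[OF contX[OF cont] compact_sphere])

lemma lemA:
  assumes t: "0 \<le> t" and cM: "c \<notin> (\<lambda>p. X p t) ` S2"
    and sup: "\<And>e. norm e = 1 \<Longrightarrow> \<exists>p\<in>S2. e \<bullet> (X p t - c) > 0"
  shows "c \<in> inside ((\<lambda>p. X p t) ` S2)"
proof (rule inside_from_support[OF M_compact[OF t] _ cM])
  show "convex ((\<lambda>p. X p t) ` S2 \<union> inside ((\<lambda>p. X p t) ` S2))"
    using csc[OF t] unfolding closed_strictly_convex_def by blast
  fix e :: "real^3" assume "norm e = 1"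
  then obtain p where "p \<in> S2" "e \<bullet> (X p t - c) > 0" using sup by blast
  thus "\<exists>y\<in>(\<lambda>p. X p t) ` S2. e \<bullet> (y - c) > 0" by blast
qed

lemma lemB:
  assumes t: "0 \<le> t" and cin: "c \<in> inside ((\<lambda>p. X p t) ` S2)" and e: "norm e = 1"
  shows "\<exists>p\<in>S2. e \<bullet> (X p t - c) \<ge> rad X c t"
proof -
  have "e \<noteq> 0" using e by auto
  then obtain l where l: "l \<ge> 0" "c + l *\<^sub>R e \<in> (\<lambda>p. X p t) ` S2" using ray_hits[OF cin] by blast
  then obtain p where p: "p \<in> S2" "X p t = c + l *\<^sub>R e" by auto
  have "e \<bullet> (X p t - c) = l" using p(2) e by (simp add: dot_square_norm)
  moreover have "norm (X p t - c) = l" using p(2) e l(1) by simp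
  moreover have "rad X c t \<le> norm (X p t - c)" using rad_props(2)[OF cont t p(1)] .
  ultimately show ?thesis using p(1) by auto
qed

lemma perturb:
  assumes t: "0 \<le> t" and t': "0 \<le> t'" and \<rho>: "\<rho> > 0"
    and close: "\<And>p. p \<in> S2 \<Longrightarrow> norm (X p t' - X p t) < \<rho>/2"
    and far: "\<And>p. p \<in> S2 \<Longrightarrow> \<rho> \<le> norm (X p t - c)"
    and sup: "\<And>e. norm e = 1 \<Longrightarrow> \<exists>p\<in>S2. e \<bullet> (X p t - c) \<ge> \<rho>"
  shows "c \<in> inside ((\<lambda>p. X p t') ` S2)"
proof (rule lemA[OF t'])
  show "c \<notin> (\<lambda>p. X p t') ` S2"
  proof
    assume "c \<in> (\<lambda>p. X p t') ` S2"
    then obtain p where p: "p \<in> S2" "X p t' = c" by auto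
    have "norm (X p t - c) \<le> norm (X p t' - X p t)" using p(2) by (simp add: norm_minus_commute)
    thus False using close[OF p(1)] far[OF p(1)] \<rho> by simp
  qed
  fix e :: "real^3" assume e: "norm e = 1"
  obtain p where p: "p \<in> S2" "e \<bullet> (X p t - c) \<ge> \<rho>" using sup[OF e] by blast
  have "- (e \<bullet> (X p t' - X p t)) \<le> norm (X p t' - X p t)"
    using norm_cauchy_schwarz[of "-e" "X p t' - X p t"] e by simp
  moreover have "e \<bullet> (X p t' - c) = e \<bullet> (X p t - c) + e \<bullet> (X p t' - X p t)"
    by (simp add: inner_diff_right)
  ultimately have "e \<bullet> (X p t' - c) > 0" using p(2) close[OF p(1)] \<rho> by linarith
  thus "\<exists>p\<in>S2. e \<bullet> (X p t' - c) > 0" using p(1) by blast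
qed

lemma rad_close:
  assumes "0 \<le> t1" "0 \<le> t2" "\<And>p. p \<in> S2 \<Longrightarrow> norm (X p t1 - X p t2) < \<eta>"
  shows "rad X c t1 \<le> rad X c t2 + \<eta>"
proof -
  obtain p2 where p2: "p2 \<in> S2" "rad X c t2 = norm (X p2 t2 - c)" using rad_props(1)[OF cont assms(2)] by blast
  have "rad X c t1 \<le> norm (X p2 t1 - c)" using rad_props(2)[OF cont assms(1) p2(1)] .
  also have "\<dots> \<le> norm (X p2 t2 - c) + norm (X p2 t1 - X p2 t2)"
    using norm_triangle_ineq[of "X p2 t2 - c" "X p2 t1 - X p2 t2"] by simp
  finally show ?thesis using assms(3)[OF p2(1)] p2(2) by simp
qed

lemma rad_cont:
  assumes a: "0 \<le> a"
  shows "continuous_on {a..b} (rad X c)"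
  unfolding continuous_on_iff
proof (intro ballI allI impI)
  fix x e assume x: "x \<in> {a..b}" and e: "(0::real) < e"
  have b0: "0 \<le> b" using x a by simp
  obtain d where d: "d > 0" "\<forall>p\<in>S2. \<forall>t1 t2. 0 \<le> t1 \<and> t1 \<le> b \<and> 0 \<le> t2 \<and> t2 \<le> b \<and> \<bar>t1 - t2\<bar> < d \<longrightarrow> norm (X p t1 - X p t2) < e/2"
    using unif_cont[OF cont b0, of "e/2"] e by auto
  show "\<exists>d>0. \<forall>x'\<in>{a..b}. dist x' x < d \<longrightarrow> dist (rad X c x') (rad X c x) < e"
  proof (intro exI[of _ d] conjI ballI impI)
    show "d > 0" by (rule d(1))
    fix x' assume x': "x' \<in> {a..b}" "dist x' x < d"
    have c1: "norm (X p x' - X p x) < e/2" if "p \<in> S2" for p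
      using d(2) that x x' a by (auto simp: dist_real_def)
    have c2: "norm (X p x - X p x') < e/2" if "p \<in> S2" for p
      using c1[OF that] by (simp add: norm_minus_commute)
    have "rad X c x' \<le> rad X c x + e/2" using rad_close[of x' x] c1 x x' a by auto
    moreover have "rad X c x \<le> rad X c x' + e/2" using rad_close[of x x'] c2 x x' a by auto
    ultimately show "dist (rad X c x') (rad X c x) < e" using e by (simp add: dist_real_def abs_le_iff)
  qed
qed

lemma growth:
  assumes a: "0 < a" and ab: "a \<le> b" and ins: "\<And>t. a \<le> t \<Longrightarrow> t \<le> b \<Longrightarrow> c \<in> inside ((\<lambda>p. X p t) ` S2)"
    and R: "R \<ge> 0" and Rle: "\<And>t. a \<le> t \<Longrightarrow> t \<le> b \<Longrightarrow> R \<le> rad X c t"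
  shows "rad X c b \<ge> rad X c a + R^2 * (b - a)"
proof (rule dini_growth[OF ab rad_cont])
  show "0 \<le> a" using a by simp
  fix t e :: real assume t: "a \<le> t" "t < b" and e: "e > 0"
  obtain \<delta> where \<delta>: "\<delta> > 0" "\<forall>s. 0 < s \<and> s < \<delta> \<longrightarrow> rad X c (t+s) \<ge> rad X c t + s * ((rad X c t)^2 - e)"
    using dini_rad[of t c e] ins[of t] t a e by auto
  have "R^2 \<le> (rad X c t)^2" using Rle[of t] t R by (simp add: power_mono)
  have "\<forall>s. 0 < s \<and> s < \<delta> \<longrightarrow> rad X c (t+s) \<ge> rad X c t + s * (R^2 - e)"
  proof (intro allI impI)
    fix s assume s: "0 < s \<and> s < \<delta>"
    have "s * (R^2 - e) \<le> s * ((rad X c t)^2 - e)"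
      using \<open>R^2 \<le> (rad X c t)^2\<close> s by (intro mult_left_mono) auto
    moreover have "rad X c t + s * ((rad X c t)^2 - e) \<le> rad X c (t + s)" using \<delta>(2) s by blast
    ultimately show "rad X c (t+s) \<ge> rad X c t + s * (R^2 - e)" by linarith
  qed
  thus "\<exists>\<delta>>0. \<forall>s. 0 < s \<and> s < \<delta> \<longrightarrow> rad X c (t+s) \<ge> rad X c t + s * (R^2 - e)" using \<delta>(1) by blast
qed

lemma rad_mono:
  assumes a: "0 < a" and ab: "a \<le> b" and ins: "\<And>t. a \<le> t \<Longrightarrow> t \<le> b \<Longrightarrow> c \<in> inside ((\<lambda>p. X p t) ` S2)"
  shows "rad X c a \<le> rad X c b"
proof -
  have "rad X c b \<ge> rad X c a + 0^2 * (b - a)"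
    by (rule growth[OF a ab ins]) (use rad_props(3)[OF cont] a in auto)
  thus ?thesis by simp
qed

end

context icf_inf begin

lemma all_inside:
  assumes t0: "0 < t0" and c0: "c \<in> inside ((\<lambda>p. X p t0) ` S2)"
  shows "\<forall>t\<ge>t0. c \<in> inside ((\<lambda>p. X p t) ` S2)"
proof (rule ccontr)
  assume "\<not> ?thesis"
  then obtain t2 where t2: "t2 \<ge> t0" "c \<notin> inside ((\<lambda>p. X p t2) ` S2)" by auto
  define A where "A = {t. t0 \<le> t \<and> c \<notin> inside ((\<lambda>p. X p t) ` S2)}"
  have t2A: "t2 \<in> A" using t2 by (simp add: A_def)
  have bdd: "bdd_below A" unfolding bdd_below_def A_def by auto
  define t1 where "t1 = Inf A"
  have t01: "t0 \<le> t1" unfolding t1_def using t2A by (intro cInf_greatest) (auto simp: A_def)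
  have before: "c \<in> inside ((\<lambda>p. X p t) ` S2)" if "t0 \<le> t" "t < t1" for t
  proof (rule ccontr)
    assume "c \<notin> inside ((\<lambda>p. X p t) ` S2)"
    hence "t \<in> A" using that by (simp add: A_def)
    hence "t1 \<le> t" unfolding t1_def using bdd by (rule cInf_lower)
    thus False using that by simp
  qed
  have cnM0: "c \<notin> (\<lambda>p. X p t0) ` S2" using c0 inside_no_overlap by blast
  define r0 where "r0 = rad X c t0"
  obtain p0 where p0: "p0 \<in> S2" "r0 = norm (X p0 t0 - c)" using rad_props(1)[OF cont, of t0 c] t0 by (auto simp: r0_def)
  have r0pos: "r0 > 0" using p0 cnM0 by auto
  have radlow: "r0 \<le> rad X c t" if "t0 \<le> t" "t < t1" for t
    unfolding r0_def by (rule rad_mono[OF t0 that(1)]) (use before that in auto)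
  have in1: "c \<in> inside ((\<lambda>p. X p t1) ` S2)"
  proof (cases "t1 = t0")
    case True thus ?thesis using c0 by simp
  next
    case False
    hence lt: "t0 < t1" using t01 by simp
    obtain d where d: "d > 0" "\<forall>p\<in>S2. \<forall>ta tb. 0 \<le> ta \<and> ta \<le> t1 \<and> 0 \<le> tb \<and> tb \<le> t1 \<and> \<bar>ta - tb\<bar> < d \<longrightarrow> norm (X p ta - X p tb) < r0/2"
      using unif_cont[OF cont, of t1 "r0/2"] t0 lt r0pos by auto
    define t where "t = max t0 (t1 - d/2)"
    have t: "t0 \<le> t" "t < t1" "\<bar>t1 - t\<bar> < d" using lt d(1) by (auto simp: t_def)
    show ?thesis
    proof (rule perturb[of t t1 r0])
      show "0 \<le> t" "0 \<le> t1" "0 < r0" using t t0 r0pos by auto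
      show "norm (X p t1 - X p t) < r0/2" if "p \<in> S2" for p
        using d(2) that t t0 by auto
      show "r0 \<le> norm (X p t - c)" if "p \<in> S2" for p
        using radlow[OF t(1,2)] rad_props(2)[OF cont _ that, of t c] t t0 by auto
      show "\<exists>p\<in>S2. e \<bullet> (X p t - c) \<ge> r0" if "norm e = 1" for e
        using lemB[of t c e] before[OF t(1,2)] that radlow[OF t(1,2)] t t0 by force
    qed
  qed
  have cnM1: "c \<notin> (\<lambda>p. X p t1) ` S2" using in1 inside_no_overlap by blast
  define r1 where "r1 = rad X c t1"
  obtain p1 where p1: "p1 \<in> S2" "r1 = norm (X p1 t1 - c)" using rad_props(1)[OF cont, of t1 c] t0 t01 by (auto simp: r1_def)
  have r1pos: "r1 > 0" using p1 cnM1 by auto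
  obtain d where d: "d > 0" "\<forall>p\<in>S2. \<forall>ta tb. 0 \<le> ta \<and> ta \<le> t1+1 \<and> 0 \<le> tb \<and> tb \<le> t1+1 \<and> \<bar>ta - tb\<bar> < d \<longrightarrow> norm (X p ta - X p tb) < r1/2"
    using unif_cont[OF cont, of "t1+1" "r1/2"] t0 t01 r1pos by auto
  define d' where "d' = min d 1"
  have after: "c \<in> inside ((\<lambda>p. X p t) ` S2)" if "t1 \<le> t" "t < t1 + d'" for t
  proof (rule perturb[of t1 t r1])
    show "0 \<le> t1" "0 \<le> t" "0 < r1" using that t0 t01 r1pos by auto
    have h: "0 \<le> t" "t \<le> t1+1" "0 \<le> t1" "t1 \<le> t1 + 1" "\<bar>t - t1\<bar> < d"
      using \<open>t1 \<le> t\<close> \<open>t < t1 + d'\<close> t0 t01 unfolding d'_def by auto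
    show "norm (X p t - X p t1) < r1/2" if "p \<in> S2" for p
      using d(2) that h by blast
    show "r1 \<le> norm (X p t1 - c)" if "p \<in> S2" for p
      using rad_props(2)[OF cont _ that, of t1 c] t0 t01 by (auto simp: r1_def)
    show "\<exists>p\<in>S2. e \<bullet> (X p t1 - c) \<ge> r1" if "norm e = 1" for e
      using lemB[of t1 c e] in1 that t0 t01 by (auto simp: r1_def)
  qed
  have "t1 + d' \<le> x" if "x \<in> A" for x
  proof (rule ccontr)
    assume "\<not> t1 + d' \<le> x"
    moreover have "t0 \<le> x" "c \<notin> inside ((\<lambda>p. X p x) ` S2)" using that by (auto simp: A_def)
    ultimately show False using before after by (cases "x < t1") auto
  qed
  hence "t1 + d' \<le> t1" unfolding t1_def using t2A by (intro cInf_greatest) auto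
  moreover have "d' > 0" using d(1) by (simp add: d'_def)
  ultimately show False by simp
qed

lemma no_global:
  assumes t0: "0 < t0" and c0: "c \<in> inside ((\<lambda>p. X p t0) ` S2)"
  shows False
proof -
  have ins: "\<And>t. t0 \<le> t \<Longrightarrow> c \<in> inside ((\<lambda>p. X p t) ` S2)" using all_inside[OF t0 c0] by blast
  have cnM0: "c \<notin> (\<lambda>p. X p t0) ` S2" using c0 inside_no_overlap by blast
  define r0 where "r0 = rad X c t0"
  obtain p0 where p0: "p0 \<in> S2" "r0 = norm (X p0 t0 - c)" using rad_props(1)[OF cont, of t0 c] t0 by (auto simp: r0_def)
  have r0pos: "r0 > 0" using p0 cnM0 by auto
  define \<tau> where "\<tau> k = t0 + (2 / r0) * (1 - 1 / 2^k)" for k :: nat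
  have \<tau>ge: "t0 \<le> \<tau> k" for k
  proof -
    have "1 / (2::real)^k \<le> 1" by simp
    hence "0 \<le> 1 - 1 / (2::real)^k" by simp
    hence "0 \<le> (2 / r0) * (1 - 1 / (2::real)^k)" using r0pos by (intro mult_nonneg_nonneg) auto
    thus ?thesis unfolding \<tau>_def by linarith
  qed
  have \<tau>le: "\<tau> k \<le> t0 + 2 / r0" for k
  proof -
    have "(2 / r0) * (1 - 1 / (2::real)^k) \<le> (2 / r0) * 1" using r0pos by (intro mult_left_mono) auto
    thus ?thesis unfolding \<tau>_def by linarith
  qed
  have \<tau>step: "\<tau> (Suc k) - \<tau> k = 1 / (2^k * r0)" for k
    unfolding \<tau>_def using r0pos by (simp add: field_simps)
  have grow: "rad X c (\<tau> k) \<ge> 2^k * r0" for k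
  proof (induction k)
    case 0 thus ?case by (simp add: \<tau>_def r0_def)
  next
    case (Suc k)
    define R where "R = rad X c (\<tau> k)"
    have R: "R \<ge> 2^k * r0" using Suc by (simp add: R_def)
    have Rpos: "R > 0" using R r0pos by (smt (verit) mult_pos_pos zero_less_power)
    have le: "\<tau> k \<le> \<tau> (Suc k)" using \<tau>step[of k] r0pos by (smt (verit) divide_pos_pos mult_pos_pos zero_less_power)
    have a0: "0 < \<tau> k" using \<tau>ge[of k] t0 by simp
    have g1: "rad X c (\<tau> (Suc k)) \<ge> rad X c (\<tau> k) + R^2 * (\<tau> (Suc k) - \<tau> k)"
    proof (rule growth[OF a0 le])
      show "c \<in> inside ((\<lambda>p. X p t) ` S2)" if "\<tau> k \<le> t" "t \<le> \<tau> (Suc k)" for t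
        using ins \<tau>ge[of k] that by auto
      show "R \<ge> 0" using Rpos by simp
      show "R \<le> rad X c t" if "\<tau> k \<le> t" "t \<le> \<tau> (Suc k)" for t
        unfolding R_def by (rule rad_mono[OF a0 that(1)]) (use ins \<tau>ge[of k] that in auto)
    qed
    have g2: "R^2 * (\<tau> (Suc k) - \<tau> k) = R * (R / (2^k * r0))"
      by (simp add: \<tau>step power2_eq_square)
    have q: "R / (2^k * r0) \<ge> 1" using R r0pos by (simp add: le_divide_eq)
    have g3: "R * (R / (2^k * r0)) \<ge> R" using mult_left_mono[OF q, of R] Rpos by linarith
    have "rad X c (\<tau> (Suc k)) \<ge> 2 * R" using g1 g2 g3 unfolding R_def by linarith
    moreover have "2 * R \<ge> 2^(Suc k) * r0" using R by simp
    ultimately show ?case by simp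
  qed
  define B where "B = rad X c (t0 + 2 / r0)"
  have bound: "2^k * r0 \<le> B" for k
  proof -
    have a0: "0 < \<tau> k" using \<tau>ge[of k] t0 by simp
    have "rad X c (\<tau> k) \<le> B"
      unfolding B_def by (rule rad_mono[OF a0 \<tau>le]) (use \<tau>ge[of k] ins in auto)
    thus ?thesis using grow[of k] by simp
  qed
  obtain k where k: "B / r0 < 2^k" using real_arch_pow[of 2 "B / r0"] by auto
  hence "B < 2^k * r0" using r0pos by (simp add: divide_less_eq)
  thus False using bound[of k] by simp
qed

end

theorem lemma4p6:
  fixes X :: "real^3 \<Rightarrow> real \<Rightarrow> real^3" and T :: ereal
  assumes "maximal_ICF_solution X T"
  shows "T < \<infinity>"
proof (rule ccontr)
  assume "\<not> T < \<infinity>"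
  hence T: "T = \<infinity>" by (cases T) auto
  have sol: "ICF_solution X \<infinity>" using assms T unfolding maximal_ICF_solution_def by simp
  have csc: "\<And>t. 0 \<le> t \<Longrightarrow> closed_strictly_convex (\<lambda>p. X p t)"
    and cont: "continuous_on (S2 \<times> {t. 0 \<le> t}) (\<lambda>(p,t). X p t)"
    and smt: "\<And>\<sigma>. \<sigma> \<in> charts \<Longrightarrow> smooth_on {(w,t). 0 < t} (\<lambda>(w,t). X (\<sigma> w) t)"
    and vel: "\<And>\<sigma> w t. \<sigma> \<in> charts \<Longrightarrow> 0 < t \<Longrightarrow> \<exists>n. is_outer_normal (\<lambda>p. X p t) \<sigma> w n \<and>
        ((\<lambda>s. X (\<sigma> w) s) has_vector_derivative (1 / gauss_curv_chart (\<lambda>w'. X (\<sigma> w') t) w) *\<^sub>R n) (at t)"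
    using sol unfolding ICF_solution_def by auto
  interpret icf_inf X using csc cont smt vel by unfold_locales auto
  obtain c where c: "c \<in> inside ((\<lambda>p. X p 1) ` S2)" using exists_inside[OF csc[of 1]] by auto
  show False using no_global[of 1 c] c by simp
qed

end
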